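(* Let $A_G \in \mathbb{R}^{n_G\times n_G}$, $B_G \in \mathbb{R}^{n_G\times n_u}$ and consider the discrete-time plant $x(k+1) = A_G x(k) + B_G u(k)$ in feedback with the neural-network controller $u(k)=\pi(x(k))$ defined by $w^0(k)=x(k)$, $w^i(k)=\phi^i(W^i w^{i-1}(k))$ for $i=1,\dots,\ell$, $u(k)=W^{\ell+1}w^\ell(k)$, where $W^i\in\mathbb{R}^{n_i\times n_{i-1}}$ ($n_0=n_G$, $n_{\ell+1}=n_u$), and $\phi^i$ applies a scalar function $\varphi:\mathbb{R}\to\mathbb{R}$ with $\varphi(0)=0$ elementwise. Let $X=\{x\in\mathbb{R}^{n_G}: -h\le Hx\le h\}$ with $H\in\mathbb{R}^{n_X\times n_G}$, $h\in\mathbb{R}^{n_X}$, $h\ge 0$, and denote by $H_i^\top$ the $i$-th row of $H$ (so $H_i\in\mathbb{R}^{n_G}$). Set $n_\phi=n_1+\dots+n_\ell$, $v^i = W^i w^{i-1}$, $v_\phi=(v^1,\dots,v^\ell)$, $w_\phi=(w^1,\dots,w^\ell)\in\mathbb{R}^{n_\phi}$, and let $N=\begin{bmatrix} N_{ux} & N_{uw}\\ N_{vx} & N_{vw}\end{bmatrix}$ be the matrix with $\begin{bmatrix}u\\ v_\phi\end{bmatrix}=N\begin{bmatrix}x\\ w_\phi\end{bmatrix}$, i.e. $N_{ux}=0$, $N_{uw}=\begin{bmatrix}0&\cdots&0&W^{\ell+1}\end{bmatrix}$, $N_{vx}=\begin{bmatrix}W^1\\0\\\vdots\\0\end{bmatrix}$,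 and $N_{vw}$ is the block matrix whose only nonzero blocks are $W^2,\dots,W^\ell$ on the first block subdiagonal (block row $i$, block column $i-1$ equals $W^i$ for $i=2,\dots,\ell$). Let $\underline v,\bar v\in\mathbb{R}^{n_\phi}$ with $\underline v\le\bar v$ be such that $v_\phi\in[\underline v,\bar v]$ whenever $x\in X$, and let $\alpha_\phi,\beta_\phi\in\mathbb{R}^{n_\phi}$ with $\alpha_\phi\le\beta_\phi$ be such that for each $i=1,\dots,n_\phi$, $(\varphi(\nu)-\alpha_{\phi,i}\nu)(\beta_{\phi,i}\nu-\varphi(\nu))\ge 0$ for all $\nu\in[\underline v_i,\bar v_i]$. Put $A_\phi=\mathrm{diag}(\alpha_\phi)$, $B_\phi=\mathrm{diag}(\beta_\phi)$, $C_1=N_{uw}\frac{B_\phi-A_\phi}{2}$, $C_2=N_{uw}\frac{A_\phi+B_\phi}{2}$, $C_3=N_{vw}\frac{B_\phi-A_\phi}{2}$, $C_4=N_{vw}\frac{A_\phi+B_\phi}{2}$, and $$\tilde N=\begin{bmatrix}\tilde N_{ux}&\tilde N_{uz}\\ \tilde N_{vx}&\tilde N_{vz}\end{bmatrix}=\begin{bmatrix} N_{ux}+C_2(I-C_4)^{-1}N_{vx} & C_1+C_2(I-C_4)^{-1}C_3\\ (I-C_4)^{-1}N_{vx} & (I-C_4)^{-1}C_3\end{bmatrix},$$ with $\tilde R_V=\begin{bmatrix} I_{n_G} & 0\\ \tilde N_{ux}&\tilde N_{uz}\end{bmatrix}$ and $\tilde R_\phi=\begin{bmatrix}\tilde N_{vx}&\tilde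 N_{vz}\\ 0 & I_{n_\phi}\end{bmatrix}$. Suppose there exist $P\in\mathbb{S}^{n_G}_{++}$ and $\lambda\in\mathbb{R}^{n_\phi}$ with $\lambda\ge 0$ such that, with $\Lambda=\mathrm{diag}(\lambda)$, $$\tilde R_V^\top\begin{bmatrix}A_G^\top PA_G-P & A_G^\top PB_G\\ B_G^\top PA_G & B_G^\top PB_G\end{bmatrix}\tilde R_V+\tilde R_\phi^\top\begin{bmatrix}\Lambda&0\\0&-\Lambda\end{bmatrix}\tilde R_\phi<0$$ and $\begin{bmatrix} h_i^2 & H_i^\top\\ H_i & P\end{bmatrix}\ge 0$ for $i=1,\dots,n_X$. Then (i) the closed-loop system is locally asymptotically stable around the equilibrium $x_*=0$, and (ii) the ellipsoid $\mathcal{E}(P)=\{x: x^\top Px\le 1\}$ is contained in the region of attraction $\mathcal{R}=\{x_0\in X: \lim_{k\to\infty}\chi(k;x_0)=0\}$, where $\chi(k;x_0)$ is the closed-loop solution at time $k$ from $x(0)=x_0$.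
   Context: Inequalities between vectors are elementwise; $\mathbb{S}^n_{++}$ denotes symmetric positive definite $n\times n$ matrices; matrix inequalities $<0$, $\ge 0$ are in the sense of negative definiteness/positive semidefiniteness. The matrix $I-C_4$ is invertible because $N_{vw}$ is strictly block lower triangular. All biases of the network are zero so that $x_*=0$, $u_*=0$ is an equilibrium. *)

theory Defs
  imports "Jordan_Normal_Form.Gauss_Jordan_Elimination"
begin

text \<open>Vectors and matrices are Jordan_Normal_Form values with explicit dimensions,
  because the number of layers and the layer widths vary.\<close>

definition diagv :: "real vec \<Rightarrow> real mat" where
  "diagv a = mat (dim_vec a) (dim_vec a) (\<lambda>(i,j). if i = j then a $ i else 0)"

definition minv :: "real mat \<Rightarrow> real mat" where
  "minv M = the (mat_inverse M)"

definition vnorm :: "real vec \<Rightarrow> real" where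
  "vnorm x = sqrt (x \<bullet> x)"

definition pos_def :: "nat \<Rightarrow> real mat \<Rightarrow> bool" where
  "pos_def n M \<longleftrightarrow> M \<in> carrier_mat n n \<and> M\<^sup>T = M \<and>
     (\<forall>x\<in>carrier_vec n. x \<noteq> 0\<^sub>v n \<longrightarrow> x \<bullet> (M *\<^sub>v x) > 0)"

definition neg_def :: "nat \<Rightarrow> real mat \<Rightarrow> bool" where
  "neg_def n M \<longleftrightarrow> M \<in> carrier_mat n n \<and>
     (\<forall>x\<in>carrier_vec n. x \<noteq> 0\<^sub>v n \<longrightarrow> x \<bullet> (M *\<^sub>v x) < 0)"

definition psd :: "nat \<Rightarrow> real mat \<Rightarrow> bool" where
  "psd n M \<longleftrightarrow> M \<in> carrier_mat n n \<and>
     (\<forall>x\<in>carrier_vec n. x \<bullet> (M *\<^sub>v x) \<ge> 0)"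

fun layer_w :: "(real \<Rightarrow> real) \<Rightarrow> (nat \<Rightarrow> real mat) \<Rightarrow> real vec \<Rightarrow> nat \<Rightarrow> real vec" where
  "layer_w \<phi> W x 0 = x"
| "layer_w \<phi> W x (Suc i) = map_vec \<phi> (W (Suc i) *\<^sub>v layer_w \<phi> W x i)"

definition layer_v :: "(real \<Rightarrow> real) \<Rightarrow> (nat \<Rightarrow> real mat) \<Rightarrow> real vec \<Rightarrow> nat \<Rightarrow> real vec" where
  "layer_v \<phi> W x i = W i *\<^sub>v layer_w \<phi> W x (i - 1)"

fun stackv :: "(nat \<Rightarrow> real vec) \<Rightarrow> nat \<Rightarrow> real vec" where
  "stackv v 0 = vec 0 (\<lambda>_. 0)"
| "stackv v (Suc i) = stackv v i @\<^sub>v v (Suc i)"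

definition nn_ctrl :: "(real \<Rightarrow> real) \<Rightarrow> (nat \<Rightarrow> real mat) \<Rightarrow> nat \<Rightarrow> real vec \<Rightarrow> real vec" where
  "nn_ctrl \<phi> W l x = W (Suc l) *\<^sub>v layer_w \<phi> W x l"

fun traj :: "real mat \<Rightarrow> real mat \<Rightarrow> (real vec \<Rightarrow> real vec) \<Rightarrow> real vec \<Rightarrow> nat \<Rightarrow> real vec" where
  "traj AG BG \<pi> x0 0 = x0"
| "traj AG BG \<pi> x0 (Suc k) = AG *\<^sub>v traj AG BG \<pi> x0 k + BG *\<^sub>v \<pi> (traj AG BG \<pi> x0 k)"

text \<open>Offset of layer i in the stacked vector: n_1 + ... + n_{i-1}.\<close>
definition off :: "(nat \<Rightarrow> nat) \<Rightarrow> nat \<Rightarrow> nat" where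
  "off n i = (\<Sum>j\<in>{1..<i}. n j)"

text \<open>Block row [0 ... 0 W^i] of size n_i x (n_1+...+n_{i-1}), W^i in the last block column.\<close>
definition rowblk :: "(nat \<Rightarrow> nat) \<Rightarrow> (nat \<Rightarrow> real mat) \<Rightarrow> nat \<Rightarrow> real mat" where
  "rowblk n W i = mat (n i) (off n i)
     (\<lambda>(r,c). if off n (i - 1) \<le> c then W i $$ (r, c - off n (i - 1)) else 0)"

definition Nuw :: "(nat \<Rightarrow> nat) \<Rightarrow> (nat \<Rightarrow> real mat) \<Rightarrow> nat \<Rightarrow> real mat" where
  "Nuw n W l = rowblk n W (Suc l)"

definition Nvx :: "(nat \<Rightarrow> nat) \<Rightarrow> (nat \<Rightarrow> real mat) \<Rightarrow> nat \<Rightarrow> real mat" where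
  "Nvx n W l = mat (off n (Suc l)) (n 0)
     (\<lambda>(r,c). if r < n 1 then W 1 $$ (r, c) else 0)"

text \<open>N_vw: block strictly lower triangular, W^i in block row i, block column i-1 (i = 2..l).\<close>
fun Nvw :: "(nat \<Rightarrow> nat) \<Rightarrow> (nat \<Rightarrow> real mat) \<Rightarrow> nat \<Rightarrow> real mat" where
  "Nvw n W 0 = 0\<^sub>m 0 0"
| "Nvw n W (Suc 0) = 0\<^sub>m (n 1) (n 1)"
| "Nvw n W (Suc (Suc i)) = four_block_mat (Nvw n W (Suc i)) (0\<^sub>m (off n (Suc (Suc i))) (n (Suc (Suc i))))
       (rowblk n W (Suc (Suc i))) (0\<^sub>m (n (Suc (Suc i))) (n (Suc (Suc i))))"

definition Nux :: "(nat \<Rightarrow> nat) \<Rightarrow> nat \<Rightarrow> real mat" where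
  "Nux n l = 0\<^sub>m (n (Suc l)) (n 0)"

definition C1 where "C1 n W l \<alpha> \<beta> = Nuw n W l * ((1/2) \<cdot>\<^sub>m (diagv \<beta> - diagv \<alpha>))"
definition C2 where "C2 n W l \<alpha> \<beta> = Nuw n W l * ((1/2) \<cdot>\<^sub>m (diagv \<alpha> + diagv \<beta>))"
definition C3 where "C3 n W l \<alpha> \<beta> = Nvw n W l * ((1/2) \<cdot>\<^sub>m (diagv \<beta> - diagv \<alpha>))"
definition C4 where "C4 n W l \<alpha> \<beta> = Nvw n W l * ((1/2) \<cdot>\<^sub>m (diagv \<alpha> + diagv \<beta>))"

definition IC4inv where
  "IC4inv n W l \<alpha> \<beta> = minv (1\<^sub>m (off n (Suc l)) - C4 n W l \<alpha> \<beta>)"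

definition tNux where "tNux n W l \<alpha> \<beta> = Nux n l + C2 n W l \<alpha> \<beta> * IC4inv n W l \<alpha> \<beta> * Nvx n W l"
definition tNuz where "tNuz n W l \<alpha> \<beta> = C1 n W l \<alpha> \<beta> + C2 n W l \<alpha> \<beta> * IC4inv n W l \<alpha> \<beta> * C3 n W l \<alpha> \<beta>"
definition tNvx where "tNvx n W l \<alpha> \<beta> = IC4inv n W l \<alpha> \<beta> * Nvx n W l"
definition tNvz where "tNvz n W l \<alpha> \<beta> = IC4inv n W l \<alpha> \<beta> * C3 n W l \<alpha> \<beta>"

definition tRV where
  "tRV n W l \<alpha> \<beta> = four_block_mat (1\<^sub>m (n 0)) (0\<^sub>m (n 0) (off n (Suc l))) (tNux n W l \<alpha> \<beta>) (tNuz n W l \<alpha> \<beta>)"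
definition tRphi where
  "tRphi n W l \<alpha> \<beta> = four_block_mat (tNvx n W l \<alpha> \<beta>) (tNvz n W l \<alpha> \<beta>)
      (0\<^sub>m (off n (Suc l)) (n 0)) (1\<^sub>m (off n (Suc l)))"

definition lmi_lhs :: "real mat \<Rightarrow> real mat \<Rightarrow> real mat \<Rightarrow> (nat \<Rightarrow> nat) \<Rightarrow> (nat \<Rightarrow> real mat) \<Rightarrow> nat
   \<Rightarrow> real vec \<Rightarrow> real vec \<Rightarrow> real vec \<Rightarrow> real mat" where
  "lmi_lhs AG BG P n W l \<alpha> \<beta> lam =
     (tRV n W l \<alpha> \<beta>)\<^sup>T * four_block_mat (AG\<^sup>T * P * AG - P) (AG\<^sup>T * P * BG) (BG\<^sup>T * P * AG) (BG\<^sup>T * P * BG)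
       * tRV n W l \<alpha> \<beta>
   + (tRphi n W l \<alpha> \<beta>)\<^sup>T * four_block_mat (diagv lam) (0\<^sub>m (dim_vec lam) (dim_vec lam))
        (0\<^sub>m (dim_vec lam) (dim_vec lam)) (- diagv lam) * tRphi n W l \<alpha> \<beta>"

definition polyX :: "nat \<Rightarrow> real mat \<Rightarrow> real vec \<Rightarrow> real vec set" where
  "polyX nG H h = {x \<in> carrier_vec nG. \<forall>i<dim_vec h. - (h $ i) \<le> (H *\<^sub>v x) $ i \<and> (H *\<^sub>v x) $ i \<le> h $ i}"

definition loc_asym_stable :: "nat \<Rightarrow> real mat \<Rightarrow> real mat \<Rightarrow> (real vec \<Rightarrow> real vec) \<Rightarrow> bool" where
  "loc_asym_stable nG AG BG \<pi> \<longleftrightarrow>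
     (\<forall>\<epsilon>>0. \<exists>\<delta>>0. \<forall>x0\<in>carrier_vec nG. vnorm x0 < \<delta> \<longrightarrow> (\<forall>k. vnorm (traj AG BG \<pi> x0 k) < \<epsilon>)) \<and>
     (\<exists>\<delta>>0. \<forall>x0\<in>carrier_vec nG. vnorm x0 < \<delta> \<longrightarrow> (\<lambda>k. vnorm (traj AG BG \<pi> x0 k)) \<longlonglongrightarrow> 0)"

definition roa :: "nat \<Rightarrow> real mat \<Rightarrow> real mat \<Rightarrow> (real vec \<Rightarrow> real vec) \<Rightarrow> real mat \<Rightarrow> real vec \<Rightarrow> real vec set" where
  "roa nG AG BG \<pi> H h = {x0 \<in> polyX nG H h. (\<lambda>k. vnorm (traj AG BG \<pi> x0 k)) \<longlonglongrightarrow> 0}"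

definition ellipsoid :: "nat \<Rightarrow> real mat \<Rightarrow> real vec set" where
  "ellipsoid nG P = {x \<in> carrier_vec nG. x \<bullet> (P *\<^sub>v x) \<le> 1}"

end

theory Submission
  imports Defs "Jordan_Normal_Form.Determinant"
begin


definition qf :: "nat \<Rightarrow> (nat \<Rightarrow> nat \<Rightarrow> real) \<Rightarrow> (nat \<Rightarrow> real) \<Rightarrow> real" where
  "qf N a y = (\<Sum>i<N. \<Sum>j<N. a i j * y i * y j)"

lemma qf_upper: "qf N a y \<le> (\<Sum>i<N. \<Sum>j<N. \<bar>a i j\<bar>) * (\<Sum>i<N. (y i)\<^sup>2)"
proof -
  have t: "a i j * y i * y j \<le> \<bar>a i j\<bar> * (\<Sum>i<N. (y i)\<^sup>2)" if "i < N" "j < N" for i j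
  proof -
    have yi: "(y i)\<^sup>2 \<le> (\<Sum>i<N. (y i)\<^sup>2)"
      using member_le_sum[of i "{..<N}" "\<lambda>i. (y i)\<^sup>2"] that by auto
    have yj: "(y j)\<^sup>2 \<le> (\<Sum>i<N. (y i)\<^sup>2)"
      using member_le_sum[of j "{..<N}" "\<lambda>i. (y i)\<^sup>2"] that by auto
    have "\<bar>y i * y j\<bar> \<le> ((y i)\<^sup>2 + (y j)\<^sup>2) / 2"
    proof -
      have "0 \<le> (\<bar>y i\<bar> - \<bar>y j\<bar>)\<^sup>2" by simp
      thus ?thesis by (simp add: power2_eq_square abs_mult algebra_simps)
    qed
    hence yy: "\<bar>y i * y j\<bar> \<le> (\<Sum>i<N. (y i)\<^sup>2)" using yi yj by argo
    hence "a i j * (y i * y j) \<le> \<bar>a i j\<bar> * (\<Sum>i<N. (y i)\<^sup>2)"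
    proof -
      have "a i j * (y i * y j) \<le> \<bar>a i j\<bar> * \<bar>y i * y j\<bar>"
        by (metis abs_ge_self abs_mult)
      also have "\<dots> \<le> \<bar>a i j\<bar> * (\<Sum>i<N. (y i)\<^sup>2)"
        by (rule mult_left_mono) (use yy in auto)
      finally show ?thesis .
    qed
    thus ?thesis by (simp add: mult.assoc)
  qed
  have "qf N a y \<le> (\<Sum>i<N. \<Sum>j<N. \<bar>a i j\<bar> * (\<Sum>i<N. (y i)\<^sup>2))"
    unfolding qf_def by (intro sum_mono) (use t in auto)
  also have "\<dots> = (\<Sum>i<N. \<Sum>j<N. \<bar>a i j\<bar>) * (\<Sum>i<N. (y i)\<^sup>2)"
    by (simp add: sum_distrib_right)
  finally show ?thesis .
qed

lemma qf_Suc: "qf (Suc N) a y = qf N a y + y N * (\<Sum>i<N. (a i N + a N i) * y i) + a N N * (y N)\<^sup>2"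
  unfolding qf_def by (simp add: sum.distrib sum_distrib_left sum_distrib_right algebra_simps power2_eq_square)

lemma qf_cong: "(\<And>i. i < N \<Longrightarrow> y i = y' i) \<Longrightarrow> qf N a y = qf N a y'"
  unfolding qf_def by (intro sum.cong) auto

lemma qf_prod: "qf N (\<lambda>i j. b i * b j) y = (\<Sum>i<N. b i * y i)\<^sup>2"
  unfolding qf_def power2_eq_square sum_product by (intro sum.cong) (auto simp: algebra_simps)

lemma qf_minus: "qf N (\<lambda>i j. a i j - b i * b j / d) y = qf N a y - qf N (\<lambda>i j. b i * b j) y / d"
  unfolding qf_def by (simp add: sum_subtractf sum_divide_distrib algebra_simps)

lemma qf_pd_bound:
  assumes "\<forall>y. (\<exists>i<N. y i \<noteq> 0) \<longrightarrow> qf N a y > 0"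
  shows "\<exists>e>0. \<forall>y. qf N a y \<ge> e * (\<Sum>i<N. (y i)\<^sup>2)"
  using assms
proof (induction N arbitrary: a)
  case 0
  then show ?case by (intro exI[of _ 1]) (auto simp: qf_def)
next
  case (Suc N)
  define c where "c = a N N"
  define b where "b i = a i N + a N i" for i
  define B where "B y = (\<Sum>i<N. b i * y i)" for y
  define a' where "a' i j = a i j - b i * b j / (4 * c)" for i j
  have qS: "qf (Suc N) a y = qf N a y + y N * B y + c * (y N)\<^sup>2" for y
    unfolding qf_Suc B_def b_def c_def by simp
  have "c > 0"
  proof -
    define y :: "nat \<Rightarrow> real" where "y i = (if i = N then 1 else 0)" for i
    have "qf (Suc N) a y > 0" using Suc.prems by (metis lessI y_def zero_neq_one)
    moreover have "qf N a y = 0" by (simp add: qf_def y_def)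
    moreover have "B y = 0" by (simp add: B_def y_def)
    ultimately show ?thesis using qS[of y] by (simp add: y_def)
  qed
  have qa': "qf N a' y = qf N a y - (B y)\<^sup>2 / (4 * c)" for y
    unfolding a'_def qf_minus qf_prod B_def by simp
  have key: "qf (Suc N) a y = qf N a' y + c * (y N + B y / (2 * c))\<^sup>2" for y
    unfolding qS qa' using \<open>c > 0\<close> by (simp add: field_simps power2_eq_square)
  have "\<forall>y. (\<exists>i<N. y i \<noteq> 0) \<longrightarrow> qf N a' y > 0"
  proof (intro allI impI)
    fix y :: "nat \<Rightarrow> real" assume "\<exists>i<N. y i \<noteq> 0"
    define y' where "y' = y(N := - B y / (2 * c))"
    have By: "B y' = B y" unfolding B_def y'_def by (intro sum.cong) auto
    have qy: "qf N a' y' = qf N a' y" by (rule qf_cong) (simp add: y'_def)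
    have "qf (Suc N) a y' > 0" using Suc.prems \<open>\<exists>i<N. y i \<noteq> 0\<close>
      by (metis fun_upd_other less_SucI less_irrefl y'_def)
    thus "qf N a' y > 0" using key[of y'] By qy \<open>c > 0\<close> by (simp add: y'_def)
  qed
  from Suc.IH[OF this] obtain e1 where e1: "e1 > 0" "\<And>y. qf N a' y \<ge> e1 * (\<Sum>i<N. (y i)\<^sup>2)"
    by blast
  define K where "K = (\<Sum>i<N. \<Sum>j<N. \<bar>b i * b j\<bar>)"
  have K0: "K \<ge> 0" unfolding K_def by (intro sum_nonneg) auto
  have BK: "(B y)\<^sup>2 \<le> K * (\<Sum>i<N. (y i)\<^sup>2)" for y
    using qf_upper[of N "\<lambda>i j. b i * b j" y] unfolding qf_prod B_def K_def .
  define e where "e = min (e1 / (1 + K / (2 * c\<^sup>2))) (c / 2)"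
  have d0: "1 + K / (2 * c\<^sup>2) > 0" using K0 \<open>c > 0\<close> by (simp add: add_pos_nonneg)
  have "e > 0" unfolding e_def using e1 d0 \<open>c > 0\<close> by simp
  moreover have "qf (Suc N) a y \<ge> e * (\<Sum>i<Suc N. (y i)\<^sup>2)" for y
  proof -
    define S where "S = (\<Sum>i<N. (y i)\<^sup>2)"
    define s where "s = y N + B y / (2 * c)"
    have S0: "S \<ge> 0" unfolding S_def by (simp add: sum_nonneg)
    have "(y N)\<^sup>2 \<le> 2 * s\<^sup>2 + 2 * (B y / (2 * c))\<^sup>2"
    proof -
      have "y N = s - B y / (2 * c)" unfolding s_def by simp
      moreover have "(p - q)\<^sup>2 \<le> 2 * p\<^sup>2 + 2 * q\<^sup>2" for p q :: real
      proof -
        have "0 \<le> (p + q)\<^sup>2" by simp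
        thus ?thesis by (simp add: power2_eq_square algebra_simps)
      qed
      ultimately show ?thesis by metis
    qed
    moreover have "2 * (B y / (2 * c))\<^sup>2 = (B y)\<^sup>2 / (2 * c\<^sup>2)"
      using \<open>c > 0\<close> by (simp add: power2_eq_square field_simps)
    moreover have "(B y)\<^sup>2 / (2 * c\<^sup>2) \<le> K * S / (2 * c\<^sup>2)"
      using BK[of y] \<open>c > 0\<close> unfolding S_def by (simp add: divide_right_mono)
    ultimately have t2: "(y N)\<^sup>2 \<le> 2 * s\<^sup>2 + K * S / (2 * c\<^sup>2)" by linarith
    have "e * (S + (y N)\<^sup>2) \<le> e * (S + 2 * s\<^sup>2 + K * S / (2 * c\<^sup>2))"
      using t2 \<open>e > 0\<close> by simp
    also have "\<dots> = (e * (1 + K / (2 * c\<^sup>2))) * S + (2 * e) * s\<^sup>2"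
      by (simp add: algebra_simps)
    also have "\<dots> \<le> e1 * S + c * s\<^sup>2"
    proof (rule add_mono)
      have "e \<le> e1 / (1 + K / (2 * c\<^sup>2))" unfolding e_def by simp
      hence "e * (1 + K / (2 * c\<^sup>2)) \<le> e1" using d0 by (simp add: pos_le_divide_eq)
      thus "(e * (1 + K / (2 * c\<^sup>2))) * S \<le> e1 * S" using S0 by (simp add: mult_right_mono)
      have "2 * e \<le> c" unfolding e_def by simp
      thus "(2 * e) * s\<^sup>2 \<le> c * s\<^sup>2" by (simp add: mult_right_mono)
    qed
    also have "\<dots> \<le> qf (Suc N) a y"
      using key[of y] e1(2)[of y] unfolding S_def s_def by simp
    finally show ?thesis unfolding S_def by simp
  qed
  ultimately show ?case by blast
qed



lemma sprod_sq: "(x :: real vec) \<in> carrier_vec N \<Longrightarrow> x \<bullet> x = (\<Sum>i<N. (x $ i)\<^sup>2)"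
  unfolding scalar_prod_def by (simp add: power2_eq_square lessThan_atLeast0)

lemma quad_qf: "(M :: real mat) \<in> carrier_mat N N \<Longrightarrow> x \<in> carrier_vec N \<Longrightarrow>
   x \<bullet> (M *\<^sub>v x) = qf N (\<lambda>i j. M $$ (i,j)) (\<lambda>i. x $ i)"
  unfolding scalar_prod_def qf_def
  by (simp add: scalar_prod_def lessThan_atLeast0 row_def sum_distrib_left algebra_simps)

lemma pd_uniform:
  assumes M: "(M :: real mat) \<in> carrier_mat N N" and pd: "\<forall>x\<in>carrier_vec N. x \<noteq> 0\<^sub>v N \<longrightarrow> x \<bullet> (M *\<^sub>v x) > 0"
  shows "\<exists>e>0. \<forall>x\<in>carrier_vec N. x \<bullet> (M *\<^sub>v x) \<ge> e * (x \<bullet> x)"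
proof -
  have "\<forall>y. (\<exists>i<N. y i \<noteq> 0) \<longrightarrow> qf N (\<lambda>i j. M $$ (i,j)) y > 0"
  proof (intro allI impI)
    fix y :: "nat \<Rightarrow> real" assume "\<exists>i<N. y i \<noteq> 0"
    then obtain i where i: "i < N" "y i \<noteq> 0" by blast
    define x where "x = vec N y"
    have x: "x \<in> carrier_vec N" unfolding x_def by simp
    have "x \<noteq> 0\<^sub>v N" using i unfolding x_def by (metis index_vec index_zero_vec(1))
    hence "x \<bullet> (M *\<^sub>v x) > 0" using pd x by blast
    moreover have "qf N (\<lambda>i j. M $$ (i,j)) (\<lambda>i. x $ i) = qf N (\<lambda>i j. M $$ (i,j)) y"
      by (rule qf_cong) (simp add: x_def)
    ultimately show "qf N (\<lambda>i j. M $$ (i,j)) y > 0" using quad_qf[OF M x] by simp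
  qed
  from qf_pd_bound[OF this] obtain e where e: "e > 0" "\<And>y. qf N (\<lambda>i j. M $$ (i,j)) y \<ge> e * (\<Sum>i<N. (y i)\<^sup>2)"
    by blast
  show ?thesis
    by (intro exI[of _ e] conjI ballI e(1)) (metis e(2) quad_qf[OF M] sprod_sq)
qed

lemma quad_upper:
  assumes M: "(M :: real mat) \<in> carrier_mat N N"
  shows "\<exists>C\<ge>0. \<forall>x\<in>carrier_vec N. x \<bullet> (M *\<^sub>v x) \<le> C * (x \<bullet> x)"
  using qf_upper quad_qf[OF M] sprod_sq
  by (intro exI[of _ "\<Sum>i<N. \<Sum>j<N. \<bar>M $$ (i,j)\<bar>"]) (auto intro!: sum_nonneg)


lemma nd_uniform:
  assumes M: "(M :: real mat) \<in> carrier_mat N N" and nd: "\<forall>x\<in>carrier_vec N. x \<noteq> 0\<^sub>v N \<longrightarrow> x \<bullet> (M *\<^sub>v x) < 0"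
  shows "\<exists>e>0. \<forall>x\<in>carrier_vec N. x \<bullet> (M *\<^sub>v x) \<le> - e * (x \<bullet> x)"
proof -
  have qn: "qf N (\<lambda>i j. - M $$ (i,j)) y = - qf N (\<lambda>i j. M $$ (i,j)) y" for y
    unfolding qf_def by (simp add: sum_negf)
  have "\<forall>y. (\<exists>i<N. y i \<noteq> 0) \<longrightarrow> qf N (\<lambda>i j. - M $$ (i,j)) y > 0"
  proof (intro allI impI)
    fix y :: "nat \<Rightarrow> real" assume "\<exists>i<N. y i \<noteq> 0"
    then obtain i where i: "i < N" "y i \<noteq> 0" by blast
    define x where "x = vec N y"
    have x: "x \<in> carrier_vec N" unfolding x_def by simp
    have "x \<noteq> 0\<^sub>v N" using i unfolding x_def by (metis index_vec index_zero_vec(1))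
    hence "x \<bullet> (M *\<^sub>v x) < 0" using nd x by blast
    moreover have "qf N (\<lambda>i j. M $$ (i,j)) (\<lambda>i. x $ i) = qf N (\<lambda>i j. M $$ (i,j)) y"
      by (rule qf_cong) (simp add: x_def)
    ultimately show "qf N (\<lambda>i j. - M $$ (i,j)) y > 0" using quad_qf[OF M x] qn by simp
  qed
  from qf_pd_bound[OF this] obtain e where e: "e > 0" "\<And>y. qf N (\<lambda>i j. - M $$ (i,j)) y \<ge> e * (\<Sum>i<N. (y i)\<^sup>2)"
    by blast
  show ?thesis
  proof (intro exI[of _ e] conjI ballI e(1))
    fix x :: "real vec" assume x: "x \<in> carrier_vec N"
    have "e * (x \<bullet> x) \<le> - (x \<bullet> (M *\<^sub>v x))"
      using e(2)[of "\<lambda>i. x $ i"] qn quad_qf[OF M x] sprod_sq[OF x] by simp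
    thus "x \<bullet> (M *\<^sub>v x) \<le> - e * (x \<bullet> x)" by simp
  qed
qed



lemma zero_mult_vec[simp]: "(w :: 'a :: comm_ring vec) \<in> carrier_vec nc \<Longrightarrow> 0\<^sub>m nr nc *\<^sub>v w = 0\<^sub>v nr"
  by (intro eq_vecI) (auto simp: scalar_prod_def)

lemma off_0[simp]: "off n 0 = 0" and off_1[simp]: "off n (Suc 0) = 0"
  unfolding off_def by auto

lemma off_Suc: "i \<ge> 1 \<Longrightarrow> off n (Suc i) = off n i + n i"
  unfolding off_def by (simp add: add.commute)

lemma off_2[simp]: "off n (Suc (Suc 0)) = n 1"
  using off_Suc[of 1 n] by simp

lemma off_ge1: "i \<ge> 1 \<Longrightarrow> n 1 \<le> off n (Suc i)"
  unfolding off_def by (rule member_le_sum) auto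

lemma stackv_carrier:
  "(\<forall>j\<in>{1..i}. v j \<in> carrier_vec (n j)) \<Longrightarrow> stackv v i \<in> carrier_vec (off n (Suc i))"
proof (induction i)
  case 0 then show ?case by simp
next
  case (Suc i)
  then have "stackv v i \<in> carrier_vec (off n (Suc i))" by auto
  moreover have "v (Suc i) \<in> carrier_vec (n (Suc i))" using Suc.prems by auto
  ultimately show ?case using off_Suc[of "Suc i" n] by auto
qed

lemma stackv_cong: "(\<forall>j\<in>{1..i}. v j = v' j) \<Longrightarrow> stackv v i = stackv v' i"
  by (induction i) auto

lemma map_vec_append: "map_vec f (a @\<^sub>v b) = map_vec f a @\<^sub>v map_vec f b"
  by (rule eq_vecI) auto

lemma stackv_map: "stackv (\<lambda>j. map_vec f (v j)) i = map_vec f (stackv v i)"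
proof (induction i)
  case 0 show ?case by (rule eq_vecI) auto
next
  case (Suc i) then show ?case by (simp add: map_vec_append)
qed

lemma stackv_add:
  "(\<forall>j\<in>{1..i}. f j \<in> carrier_vec (n j) \<and> g j \<in> carrier_vec (n j)) \<Longrightarrow>
   stackv f i + stackv g i = stackv (\<lambda>j. f j + g j) i"
proof (induction i)
  case 0 show ?case by (rule eq_vecI) auto
next
  case (Suc i)
  have c: "stackv f i \<in> carrier_vec (off n (Suc i))" "stackv g i \<in> carrier_vec (off n (Suc i))"
    using Suc.prems by (auto intro!: stackv_carrier)
  have c2: "f (Suc i) \<in> carrier_vec (n (Suc i))" "g (Suc i) \<in> carrier_vec (n (Suc i))"
    using Suc.prems by auto
  show ?case using Suc append_vec_add[OF c c2] by auto
qed

lemma layer_w_carrier: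
  assumes x: "x \<in> carrier_vec (n 0)" and W: "\<forall>i\<in>{1..Suc l}. W i \<in> carrier_mat (n i) (n (i - 1))"
  shows "i \<le> Suc l \<Longrightarrow> layer_w \<phi> W x i \<in> carrier_vec (n i)"
proof (induction i)
  case 0 then show ?case using x by simp
next
  case (Suc i)
  then have "W (Suc i) \<in> carrier_mat (n (Suc i)) (n i)" using W by force
  then show ?case using Suc by auto
qed

lemma layer_v_carrier:
  assumes x: "x \<in> carrier_vec (n 0)" and W: "\<forall>i\<in>{1..Suc l}. W i \<in> carrier_mat (n i) (n (i - 1))"
    and i: "1 \<le> i" "i \<le> Suc l"
  shows "layer_v \<phi> W x i \<in> carrier_vec (n i)"
proof -
  have "W i \<in> carrier_mat (n i) (n (i - 1))" using W i by auto
  moreover have "layer_w \<phi> W x (i - 1) \<in> carrier_vec (n (i - 1))"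
    using layer_w_carrier[OF x W, of "i - 1" \<phi>] i by auto
  ultimately show ?thesis by (metis layer_v_def mult_mat_vec_carrier)
qed

lemma rowblk_row:
  assumes k: "k \<ge> 1" and Wk: "W (Suc k) \<in> carrier_mat (n (Suc k)) (n k)" and r: "r < n (Suc k)"
  shows "row (rowblk n W (Suc k)) r = 0\<^sub>v (off n k) @\<^sub>v row (W (Suc k)) r"
  using Wk r off_Suc[OF k, of n] unfolding rowblk_def
  by (intro eq_vecI) auto

lemma rowblk_mult:
  assumes k: "k \<ge> 1" and Wk: "W (Suc k) \<in> carrier_mat (n (Suc k)) (n k)"
    and s: "s \<in> carrier_vec (off n k)" and w: "w \<in> carrier_vec (n k)"
  shows "rowblk n W (Suc k) *\<^sub>v (s @\<^sub>v w) = W (Suc k) *\<^sub>v w"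
proof (rule eq_vecI)
  show "dim_vec (rowblk n W (Suc k) *\<^sub>v (s @\<^sub>v w)) = dim_vec (W (Suc k) *\<^sub>v w)"
    using Wk unfolding rowblk_def by simp
  fix r assume "r < dim_vec (W (Suc k) *\<^sub>v w)"
  hence r: "r < n (Suc k)" using Wk by simp
  have "(rowblk n W (Suc k) *\<^sub>v (s @\<^sub>v w)) $ r = row (rowblk n W (Suc k)) r \<bullet> (s @\<^sub>v w)"
    by (rule index_mult_mat_vec) (simp add: rowblk_def r)
  also have "\<dots> = 0\<^sub>v (off n k) \<bullet> s + row (W (Suc k)) r \<bullet> w"
  proof -
    have "row (W (Suc k)) r \<in> carrier_vec (n k)" using Wk by (metis carrier_matD(2) row_carrier)
    thus ?thesis unfolding rowblk_row[of k W n r, OF k Wk r] using Wk s w by (intro scalar_prod_append) auto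
  qed
  also have "\<dots> = (W (Suc k) *\<^sub>v w) $ r" using s r Wk by simp
  finally show "(rowblk n W (Suc k) *\<^sub>v (s @\<^sub>v w)) $ r = (W (Suc k) *\<^sub>v w) $ r" .
qed

lemma Nuw_mult:
  assumes l: "l \<ge> 1" and Wl: "W (Suc l) \<in> carrier_mat (n (Suc l)) (n l)"
    and wl: "\<forall>j\<in>{1..l}. wl j \<in> carrier_vec (n j)"
  shows "Nuw n W l *\<^sub>v stackv wl l = W (Suc l) *\<^sub>v wl l"
proof -
  obtain i where i: "l = Suc i" using l by (cases l) auto
  have "stackv wl i \<in> carrier_vec (off n l)" using stackv_carrier[of i wl n] wl i by auto
  moreover have "wl l \<in> carrier_vec (n l)" using wl l by auto
  ultimately show ?thesis unfolding Nuw_def using rowblk_mult[of l W n, OF l Wl] i by simp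
qed

lemma Nvw_carrier: "Nvw n W (Suc i) \<in> carrier_mat (off n (Suc (Suc i))) (off n (Suc (Suc i)))"
proof (induction i)
  case 0 then show ?case by simp
next
  case (Suc i)
  then show ?case using off_Suc[of "Suc (Suc i)" n] by (auto simp: rowblk_def)
qed

lemma Nvw_mult:
  assumes "\<forall>j\<in>{1..Suc i}. wl j \<in> carrier_vec (n j)"
    and "\<forall>j\<in>{2..Suc i}. W j \<in> carrier_mat (n j) (n (j - 1))"
  shows "Nvw n W (Suc i) *\<^sub>v stackv wl (Suc i) =
         stackv (\<lambda>j. if j = 1 then 0\<^sub>v (n 1) else W j *\<^sub>v wl (j - 1)) (Suc i)"
  using assms
proof (induction i)
  case 0
  have "wl 1 \<in> carrier_vec (n 1)" using 0 by auto
  then show ?case by (intro eq_vecI) (auto simp: scalar_prod_def)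
next
  case (Suc i)
  let ?F = "\<lambda>j. if j = 1 then 0\<^sub>v (n 1) else W j *\<^sub>v wl (j - 1)"
  have st: "stackv wl (Suc i) \<in> carrier_vec (off n (Suc (Suc i)))"
    using Suc.prems by (intro stackv_carrier) auto
  have w2: "wl (Suc (Suc i)) \<in> carrier_vec (n (Suc (Suc i)))" using Suc.prems by auto
  have W2: "W (Suc (Suc i)) \<in> carrier_mat (n (Suc (Suc i))) (n (Suc i))" using Suc.prems(2) by force
  have st0: "stackv wl i \<in> carrier_vec (off n (Suc i))"
    using Suc.prems by (intro stackv_carrier) auto
  have w1: "wl (Suc i) \<in> carrier_vec (n (Suc i))" using Suc.prems by auto
  have rb: "rowblk n W (Suc (Suc i)) \<in> carrier_mat (n (Suc (Suc i))) (off n (Suc (Suc i)))"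
    unfolding rowblk_def by simp
  have FC: "stackv ?F (Suc i) \<in> carrier_vec (off n (Suc (Suc i)))"
  proof (intro stackv_carrier ballI)
    fix j assume j: "j \<in> {1..Suc i}"
    show "?F j \<in> carrier_vec (n j)"
    proof (cases "j = 1")
      case False
      have "j - 1 \<in> {1..Suc (Suc i)}" "j \<in> {2..Suc (Suc i)}" using j False by auto
      hence "W j \<in> carrier_mat (n j) (n (j - 1))" "wl (j - 1) \<in> carrier_vec (n (j - 1))"
        using Suc.prems by auto
      thus ?thesis using False by auto
    qed auto
  qed
  have IH: "Nvw n W (Suc i) *\<^sub>v stackv wl (Suc i) = stackv ?F (Suc i)"
    using Suc by auto
  have "Nvw n W (Suc (Suc i)) *\<^sub>v stackv wl (Suc (Suc i)) =
     (Nvw n W (Suc i) *\<^sub>v stackv wl (Suc i) + 0\<^sub>m (off n (Suc (Suc i))) (n (Suc (Suc i))) *\<^sub>v wl (Suc (Suc i)))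
     @\<^sub>v (rowblk n W (Suc (Suc i)) *\<^sub>v stackv wl (Suc i) + 0\<^sub>m (n (Suc (Suc i))) (n (Suc (Suc i))) *\<^sub>v wl (Suc (Suc i)))"
    unfolding Nvw.simps stackv.simps(2)[of wl "Suc i"]
    by (rule four_block_mat_mult_vec[OF Nvw_carrier _ rb _ st w2]) auto
  also have "rowblk n W (Suc (Suc i)) *\<^sub>v stackv wl (Suc i) = W (Suc (Suc i)) *\<^sub>v wl (Suc i)"
    using rowblk_mult[of "Suc i" W n, OF _ W2 st0 w1] by simp
  also have "(Nvw n W (Suc i) *\<^sub>v stackv wl (Suc i) + 0\<^sub>m (off n (Suc (Suc i))) (n (Suc (Suc i))) *\<^sub>v wl (Suc (Suc i)))
     @\<^sub>v (W (Suc (Suc i)) *\<^sub>v wl (Suc i) + 0\<^sub>m (n (Suc (Suc i))) (n (Suc (Suc i))) *\<^sub>v wl (Suc (Suc i)))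
     = stackv ?F (Suc i) @\<^sub>v (W (Suc (Suc i)) *\<^sub>v wl (Suc i))"
    unfolding IH using FC W2 w1 w2 by (simp del: stackv.simps)
  also have "\<dots> = stackv ?F (Suc (Suc i))"
    by (simp only: stackv.simps(2)[of ?F "Suc i"]) (simp del: stackv.simps)
  finally show ?case .
qed

lemma stackv_idx_first:
  "i \<ge> 1 \<Longrightarrow> (\<forall>j\<in>{1..i}. g j \<in> carrier_vec (n j)) \<Longrightarrow> r < n 1 \<Longrightarrow> stackv g i $ r = g 1 $ r"
proof (induction i)
  case 0 then show ?case by simp
next
  case (Suc i)
  show ?case
  proof (cases "i = 0")
    case True
    then show ?thesis using Suc.prems by auto
  next
    case False
    have "stackv g i \<in> carrier_vec (off n (Suc i))" using Suc.prems by (intro stackv_carrier) auto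
    moreover have "n 1 \<le> off n (Suc i)" using False off_ge1[of i n] by auto
    ultimately show ?thesis using Suc False by auto
  qed
qed

lemma stackv_idx_zero:
  "(\<forall>j\<in>{1..i}. g j \<in> carrier_vec (n j)) \<Longrightarrow> (\<forall>j\<in>{2..i}. g j = 0\<^sub>v (n j)) \<Longrightarrow>
   n 1 \<le> r \<Longrightarrow> r < off n (Suc i) \<Longrightarrow> stackv g i $ r = 0"
proof (induction i)
  case 0 then show ?case by simp
next
  case (Suc i)
  show ?case
  proof (cases "i = 0")
    case True
    then show ?thesis using Suc.prems by auto
  next
    case False
    have c: "stackv g i \<in> carrier_vec (off n (Suc i))" using Suc.prems by (intro stackv_carrier) auto
    have z: "g (Suc i) = 0\<^sub>v (n (Suc i))" using Suc.prems False by auto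
    have o: "off n (Suc (Suc i)) = off n (Suc i) + n (Suc i)" using off_Suc[of "Suc i" n] by simp
    show ?thesis
    proof (cases "r < off n (Suc i)")
      case True then show ?thesis using Suc c by auto
    next
      case False then show ?thesis using c z Suc.prems(4) o by auto
    qed
  qed
qed

lemma Nvx_mult:
  assumes l: "l \<ge> 1" and x: "x \<in> carrier_vec (n 0)" and W1: "W 1 \<in> carrier_mat (n 1) (n 0)"
  shows "Nvx n W l *\<^sub>v x = stackv (\<lambda>j. if j = 1 then W 1 *\<^sub>v x else 0\<^sub>v (n j)) l"
proof -
  let ?g = "\<lambda>j. if j = 1 then W 1 *\<^sub>v x else 0\<^sub>v (n j)"
  have gc: "\<forall>j\<in>{1..l}. ?g j \<in> carrier_vec (n j)" using W1 x by auto
  have sc: "stackv ?g l \<in> carrier_vec (off n (Suc l))" by (rule stackv_carrier[OF gc])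
  show ?thesis
  proof (rule eq_vecI)
    show "dim_vec (Nvx n W l *\<^sub>v x) = dim_vec (stackv ?g l)" using sc unfolding Nvx_def by simp
    fix r assume "r < dim_vec (stackv ?g l)"
    hence r: "r < off n (Suc l)" using sc by simp
    have ix: "(Nvx n W l *\<^sub>v x) $ r = row (Nvx n W l) r \<bullet> x"
      by (rule index_mult_mat_vec) (simp add: Nvx_def r)
    show "(Nvx n W l *\<^sub>v x) $ r = stackv ?g l $ r"
    proof (cases "r < n 1")
      case True
      have "stackv ?g l $ r = (W 1 *\<^sub>v x) $ r" using stackv_idx_first[OF l gc True] by simp
      moreover have "row (Nvx n W l) r = row (W 1) r"
        using True r W1 unfolding Nvx_def by (intro eq_vecI) auto
      moreover have "(W 1 *\<^sub>v x) $ r = row (W 1) r \<bullet> x" using True W1 by simp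
      ultimately show ?thesis using ix by simp
    next
      case False
      have "stackv ?g l $ r = 0" using stackv_idx_zero[OF gc _ _ r] False by auto
      moreover have "row (Nvx n W l) r = 0\<^sub>v (n 0)"
        using False r unfolding Nvx_def by (intro eq_vecI) auto
      ultimately show ?thesis using ix x by simp
    qed
  qed
qed


lemma Nvw_lower:
  "r < off n (Suc (Suc i)) \<Longrightarrow> c < off n (Suc (Suc i)) \<Longrightarrow> r \<le> c \<Longrightarrow> Nvw n W (Suc i) $$ (r,c) = 0"
proof (induction i arbitrary: r c)
  case 0 then show ?case by simp
next
  case (Suc i)
  define oo where "oo = off n (Suc (Suc i))"
  have A: "dim_row (Nvw n W (Suc i)) = oo" "dim_col (Nvw n W (Suc i)) = oo"
    using Nvw_carrier[of n W i] unfolding oo_def by auto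
  have o3: "off n (Suc (Suc (Suc i))) = oo + n (Suc (Suc i))" unfolding oo_def by (rule off_Suc) simp
  have r: "r < oo + n (Suc (Suc i))" and c: "c < oo + n (Suc (Suc i))" using Suc.prems o3 by auto
  have e: "Nvw n W (Suc (Suc i)) $$ (r,c) = (if r < oo then
      if c < oo then Nvw n W (Suc i) $$ (r,c) else 0\<^sub>m oo (n (Suc (Suc i))) $$ (r,c - oo)
      else if c < oo then rowblk n W (Suc (Suc i)) $$ (r - oo, c)
      else 0\<^sub>m (n (Suc (Suc i))) (n (Suc (Suc i))) $$ (r - oo, c - oo))"
    unfolding Nvw.simps using index_mat_four_block(1)[of r "Nvw n W (Suc i)" "0\<^sub>m (n (Suc (Suc i))) (n (Suc (Suc i)))" c]
      A r c oo_def by simp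
  show ?case
  proof (cases "r < oo")
    case True
    show ?thesis
    proof (cases "c < oo")
      case True
      then show ?thesis using e \<open>r < oo\<close> Suc.IH[of r c] Suc.prems(3) unfolding oo_def by simp
    next
      case False
      then show ?thesis using e \<open>r < oo\<close> c by simp
    qed
  next
    case False
    then have "\<not> c < oo" using Suc.prems(3) by simp
    then show ?thesis using e False r c by simp
  qed
qed



definition gdiag :: "nat \<Rightarrow> (nat \<Rightarrow> real) \<Rightarrow> real mat" where
  "gdiag N d = mat N N (\<lambda>(i,j). if i = j then d i else 0)"

lemma gdiag_carrier[simp]: "gdiag N d \<in> carrier_mat N N"
  unfolding gdiag_def by simp

lemma gdiag_mult: assumes v: "v \<in> carrier_vec N"
  shows "gdiag N d *\<^sub>v v = vec N (\<lambda>i. d i * v $ i)"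
proof (rule eq_vecI)
  fix i assume "i < dim_vec (vec N (\<lambda>i. d i * v $ i))"
  hence i: "i < N" by simp
  have "(gdiag N d *\<^sub>v v) $ i = (\<Sum>j\<in>{0..<N}. (if i = j then d i else 0) * v $ j)"
    using i v unfolding gdiag_def by (simp add: scalar_prod_def)
  also have "\<dots> = (\<Sum>j\<in>{0..<N}. if i = j then d i * v $ j else 0)"
    by (intro sum.cong) auto
  also have "\<dots> = d i * v $ i" using i by simp
  finally show "(gdiag N d *\<^sub>v v) $ i = vec N (\<lambda>i. d i * v $ i) $ i" using i by simp
qed (simp add: gdiag_def)

lemma gdiag_quad: assumes v: "v \<in> carrier_vec N"
  shows "v \<bullet> (gdiag N d *\<^sub>v v) = (\<Sum>i<N. d i * (v $ i)\<^sup>2)"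
  unfolding gdiag_mult[OF v] using v
  by (simp add: scalar_prod_def lessThan_atLeast0 power2_eq_square algebra_simps)

lemma diagv_gdiag: "diagv a = gdiag (dim_vec a) (\<lambda>i. a $ i)"
  unfolding diagv_def gdiag_def by simp

lemma diag_half_plus: assumes "a \<in> carrier_vec N" "b \<in> carrier_vec N"
  shows "(1/2) \<cdot>\<^sub>m (diagv a + diagv b) = gdiag N (\<lambda>i. (a $ i + b $ i) / 2)"
  using assms unfolding diagv_def gdiag_def by (intro eq_matI) auto

lemma diag_half_minus: assumes "a \<in> carrier_vec N" "b \<in> carrier_vec N"
  shows "(1/2) \<cdot>\<^sub>m (diagv b - diagv a) = gdiag N (\<lambda>i. (b $ i - a $ i) / 2)"
  using assms unfolding diagv_def gdiag_def by (intro eq_matI) auto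

lemma neg_diagv: assumes "a \<in> carrier_vec N"
  shows "- diagv a = gdiag N (\<lambda>i. - a $ i)"
  using assms unfolding diagv_def gdiag_def by (intro eq_matI) auto

lemma lower_mult_gdiag:
  assumes A: "A \<in> carrier_mat N N" and low: "\<And>r c. r < N \<Longrightarrow> c < N \<Longrightarrow> r \<le> c \<Longrightarrow> A $$ (r,c) = 0"
    and r: "r < N" and c: "c < N" and rc: "r \<le> c"
  shows "(A * gdiag N d) $$ (r,c) = 0"
proof -
  have "(A * gdiag N d) $$ (r,c) = (\<Sum>k\<in>{0..<N}. A $$ (r,k) * (if k = c then d k else 0))"
    using A r c unfolding gdiag_def by (simp add: scalar_prod_def)
  also have "\<dots> = 0" using low[OF r c rc] by (intro sum.neutral) auto
  finally show ?thesis .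
qed

lemma unit_lower_inverse:
  assumes C: "(C :: real mat) \<in> carrier_mat N N"
    and low: "\<And>r c. r < N \<Longrightarrow> c < N \<Longrightarrow> r \<le> c \<Longrightarrow> C $$ (r,c) = 0"
  shows "minv (1\<^sub>m N - C) * (1\<^sub>m N - C) = 1\<^sub>m N \<and> minv (1\<^sub>m N - C) \<in> carrier_mat N N"
proof -
  let ?A = "1\<^sub>m N - C"
  have A: "?A \<in> carrier_mat N N" using minus_carrier_mat[OF C] by simp
  have "det ?A = prod_list (diag_mat ?A)"
  proof (rule det_lower_triangular[OF _ A])
    fix i j assume "i < j" "j < N"
    thus "?A $$ (i,j) = 0" using C low[of i j] by simp
  qed
  also have "diag_mat ?A = replicate N 1"
    using C low unfolding diag_mat_def by (intro nth_equalityI) auto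
  finally have "det ?A \<noteq> 0" by simp
  from det_non_zero_imp_unit[OF A this] have U: "?A \<in> Units (ring_mat TYPE(real) N ())" .
  show ?thesis
  proof (cases "mat_inverse ?A")
    case None
    then show ?thesis using mat_inverse(1)[OF A None, of "()"] U by simp
  next
    case (Some B)
    then show ?thesis using mat_inverse(2)[OF A Some] unfolding minv_def by simp
  qed
qed

lemma tr_scalar: assumes A: "(A :: real mat) \<in> carrier_mat m n" and x: "x \<in> carrier_vec n" and w: "w \<in> carrier_vec m"
  shows "x \<bullet> (A\<^sup>T *\<^sub>v w) = (A *\<^sub>v x) \<bullet> w"
proof -
  have "x \<bullet> (A\<^sup>T *\<^sub>v w) = (A\<^sup>T *\<^sub>v w) \<bullet> x"
    by (rule comm_scalar_prod[OF x]) (use A w in simp)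
  also have "\<dots> = w \<bullet> (A *\<^sub>v x)" by (rule transpose_vec_mult_scalar[OF A x w])
  also have "\<dots> = (A *\<^sub>v x) \<bullet> w" by (rule comm_scalar_prod[OF w]) (use A x in simp)
  finally show ?thesis .
qed

lemma tr3_mult: assumes A: "(A :: real mat) \<in> carrier_mat m n" and P: "P \<in> carrier_mat m m'"
   and B: "B \<in> carrier_mat m' k" and y: "y \<in> carrier_vec k"
  shows "(A\<^sup>T * P * B) *\<^sub>v y = A\<^sup>T *\<^sub>v (P *\<^sub>v (B *\<^sub>v y))"
proof -
  have AP: "A\<^sup>T * P \<in> carrier_mat n m'" using A P by simp
  have "(A\<^sup>T * P * B) *\<^sub>v y = (A\<^sup>T * P) *\<^sub>v (B *\<^sub>v y)"
    by (rule assoc_mult_mat_vec[OF AP B y])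
  also have "\<dots> = A\<^sup>T *\<^sub>v (P *\<^sub>v (B *\<^sub>v y))"
    by (rule assoc_mult_mat_vec) (use A P B y in auto)
  finally show ?thesis .
qed

lemma quad_congr: assumes A: "(A :: real mat) \<in> carrier_mat m n" and B: "B \<in> carrier_mat m m" and y: "y \<in> carrier_vec n"
  shows "y \<bullet> ((A\<^sup>T * B * A) *\<^sub>v y) = (A *\<^sub>v y) \<bullet> (B *\<^sub>v (A *\<^sub>v y))"
proof -
  have "(A\<^sup>T * B * A) *\<^sub>v y = A\<^sup>T *\<^sub>v (B *\<^sub>v (A *\<^sub>v y))"
    by (rule tr3_mult[OF A B A y])
  thus ?thesis using tr_scalar[OF A y, of "B *\<^sub>v (A *\<^sub>v y)"] A B y by simp
qed


lemma zero_mult_vec': "(w :: 'a :: comm_ring vec) \<in> carrier_vec nc \<Longrightarrow> 0\<^sub>m nr nc *\<^sub>v w = 0\<^sub>v nr"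
  by (intro eq_vecI) (auto simp: scalar_prod_def)

lemma assoc3: assumes "(A :: real mat) \<in> carrier_mat m k" "B \<in> carrier_mat k p" "C \<in> carrier_mat p q" "y \<in> carrier_vec q"
  shows "(A * B * C) *\<^sub>v y = A *\<^sub>v (B *\<^sub>v (C *\<^sub>v y))"
proof -
  have "(A * B * C) *\<^sub>v y = (A * B) *\<^sub>v (C *\<^sub>v y)" by (rule assoc_mult_mat_vec) (use assms in auto)
  also have "\<dots> = A *\<^sub>v (B *\<^sub>v (C *\<^sub>v y))" by (rule assoc_mult_mat_vec) (use assms in auto)
  finally show ?thesis .
qed

lemma mblock:
  assumes AG: "AG \<in> carrier_mat nG nG" and BG: "BG \<in> carrier_mat nG nu" and P: "(P :: real mat) \<in> carrier_mat nG nG"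
    and x: "x \<in> carrier_vec nG" and u: "u \<in> carrier_vec nu"
  shows "(x @\<^sub>v u) \<bullet> (four_block_mat (AG\<^sup>T * P * AG - P) (AG\<^sup>T * P * BG) (BG\<^sup>T * P * AG) (BG\<^sup>T * P * BG) *\<^sub>v (x @\<^sub>v u))
     = (AG *\<^sub>v x + BG *\<^sub>v u) \<bullet> (P *\<^sub>v (AG *\<^sub>v x + BG *\<^sub>v u)) - x \<bullet> (P *\<^sub>v x)"
proof -
  define a where "a = AG *\<^sub>v x"
  define b where "b = BG *\<^sub>v u"
  have a: "a \<in> carrier_vec nG" and b: "b \<in> carrier_vec nG" unfolding a_def b_def using AG BG x u by auto
  have Pa: "P *\<^sub>v a \<in> carrier_vec nG" and Pb: "P *\<^sub>v b \<in> carrier_vec nG" and Px: "P *\<^sub>v x \<in> carrier_vec nG"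
    using P a b x by auto
  have M1: "AG\<^sup>T * P * AG - P \<in> carrier_mat nG nG" using AG P by (intro minus_carrier_mat) simp
  have M2: "AG\<^sup>T * P * BG \<in> carrier_mat nG nu" using AG P BG by simp
  have M3: "BG\<^sup>T * P * AG \<in> carrier_mat nu nG" using AG P BG by simp
  have M4: "BG\<^sup>T * P * BG \<in> carrier_mat nu nu" using P BG by simp
  have X1: "(AG\<^sup>T * P * AG - P) *\<^sub>v x = AG\<^sup>T *\<^sub>v (P *\<^sub>v a) - P *\<^sub>v x"
  proof -
    have "(AG\<^sup>T * P * AG - P) *\<^sub>v x = (AG\<^sup>T * P * AG) *\<^sub>v x - P *\<^sub>v x"
      by (rule minus_mult_distrib_mat_vec) (use AG P x in auto)
    thus ?thesis unfolding a_def tr3_mult[OF AG P AG x] .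
  qed
  have X2: "(AG\<^sup>T * P * BG) *\<^sub>v u = AG\<^sup>T *\<^sub>v (P *\<^sub>v b)" unfolding b_def by (rule tr3_mult[OF AG P BG u])
  have X3: "(BG\<^sup>T * P * AG) *\<^sub>v x = BG\<^sup>T *\<^sub>v (P *\<^sub>v a)" unfolding a_def by (rule tr3_mult[OF BG P AG x])
  have X4: "(BG\<^sup>T * P * BG) *\<^sub>v u = BG\<^sup>T *\<^sub>v (P *\<^sub>v b)" unfolding b_def by (rule tr3_mult[OF BG P BG u])
  have c1: "AG\<^sup>T *\<^sub>v (P *\<^sub>v a) \<in> carrier_vec nG" "AG\<^sup>T *\<^sub>v (P *\<^sub>v b) \<in> carrier_vec nG"
    "BG\<^sup>T *\<^sub>v (P *\<^sub>v a) \<in> carrier_vec nu" "BG\<^sup>T *\<^sub>v (P *\<^sub>v b) \<in> carrier_vec nu"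
    using AG BG Pa Pb by auto
  have "four_block_mat (AG\<^sup>T * P * AG - P) (AG\<^sup>T * P * BG) (BG\<^sup>T * P * AG) (BG\<^sup>T * P * BG) *\<^sub>v (x @\<^sub>v u)
     = ((AG\<^sup>T *\<^sub>v (P *\<^sub>v a) - P *\<^sub>v x) + AG\<^sup>T *\<^sub>v (P *\<^sub>v b)) @\<^sub>v (BG\<^sup>T *\<^sub>v (P *\<^sub>v a) + BG\<^sup>T *\<^sub>v (P *\<^sub>v b))"
    using four_block_mat_mult_vec[OF M1 M2 M3 M4 x u] X1 X2 X3 X4 by simp
  hence "(x @\<^sub>v u) \<bullet> (four_block_mat (AG\<^sup>T * P * AG - P) (AG\<^sup>T * P * BG) (BG\<^sup>T * P * AG) (BG\<^sup>T * P * BG) *\<^sub>v (x @\<^sub>v u))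
     = x \<bullet> ((AG\<^sup>T *\<^sub>v (P *\<^sub>v a) - P *\<^sub>v x) + AG\<^sup>T *\<^sub>v (P *\<^sub>v b)) + u \<bullet> (BG\<^sup>T *\<^sub>v (P *\<^sub>v a) + BG\<^sup>T *\<^sub>v (P *\<^sub>v b))"
    using scalar_prod_append[OF x u, of "(AG\<^sup>T *\<^sub>v (P *\<^sub>v a) - P *\<^sub>v x) + AG\<^sup>T *\<^sub>v (P *\<^sub>v b)"
        "BG\<^sup>T *\<^sub>v (P *\<^sub>v a) + BG\<^sup>T *\<^sub>v (P *\<^sub>v b)"] c1 Px by simp
  also have "x \<bullet> ((AG\<^sup>T *\<^sub>v (P *\<^sub>v a) - P *\<^sub>v x) + AG\<^sup>T *\<^sub>v (P *\<^sub>v b))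
      = x \<bullet> (AG\<^sup>T *\<^sub>v (P *\<^sub>v a)) - x \<bullet> (P *\<^sub>v x) + x \<bullet> (AG\<^sup>T *\<^sub>v (P *\<^sub>v b))"
    using c1 Px x by (simp add: scalar_prod_add_distrib[of _ nG] scalar_prod_minus_distrib[of _ nG])
  also have "u \<bullet> (BG\<^sup>T *\<^sub>v (P *\<^sub>v a) + BG\<^sup>T *\<^sub>v (P *\<^sub>v b)) = u \<bullet> (BG\<^sup>T *\<^sub>v (P *\<^sub>v a)) + u \<bullet> (BG\<^sup>T *\<^sub>v (P *\<^sub>v b))"
    using c1 u by (simp add: scalar_prod_add_distrib[of _ nu])
  also have "x \<bullet> (AG\<^sup>T *\<^sub>v (P *\<^sub>v a)) = a \<bullet> (P *\<^sub>v a)" unfolding a_def using tr_scalar[OF AG x] Pa a_def by simp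
  also have "x \<bullet> (AG\<^sup>T *\<^sub>v (P *\<^sub>v b)) = a \<bullet> (P *\<^sub>v b)" unfolding a_def using tr_scalar[OF AG x] Pb by simp
  also have "u \<bullet> (BG\<^sup>T *\<^sub>v (P *\<^sub>v a)) = b \<bullet> (P *\<^sub>v a)" unfolding b_def using tr_scalar[OF BG u] Pa by simp
  also have "u \<bullet> (BG\<^sup>T *\<^sub>v (P *\<^sub>v b)) = b \<bullet> (P *\<^sub>v b)" unfolding b_def using tr_scalar[OF BG u] Pb b_def by simp
  also have "(AG *\<^sub>v x + BG *\<^sub>v u) \<bullet> (P *\<^sub>v (AG *\<^sub>v x + BG *\<^sub>v u))
      = a \<bullet> (P *\<^sub>v a) + a \<bullet> (P *\<^sub>v b) + (b \<bullet> (P *\<^sub>v a) + b \<bullet> (P *\<^sub>v b))"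
  proof -
    have "P *\<^sub>v (a + b) = P *\<^sub>v a + P *\<^sub>v b" by (rule mult_add_distrib_mat_vec[OF P a b])
    moreover have "(a + b) \<bullet> (P *\<^sub>v a + P *\<^sub>v b) = a \<bullet> (P *\<^sub>v a + P *\<^sub>v b) + b \<bullet> (P *\<^sub>v a + P *\<^sub>v b)"
      by (rule add_scalar_prod_distrib[OF a b]) (use Pa Pb in auto)
    moreover have "a \<bullet> (P *\<^sub>v a + P *\<^sub>v b) = a \<bullet> (P *\<^sub>v a) + a \<bullet> (P *\<^sub>v b)"
      by (rule scalar_prod_add_distrib[OF a Pa Pb])
    moreover have "b \<bullet> (P *\<^sub>v a + P *\<^sub>v b) = b \<bullet> (P *\<^sub>v a) + b \<bullet> (P *\<^sub>v b)"
      by (rule scalar_prod_add_distrib[OF b Pa Pb])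
    ultimately show ?thesis unfolding a_def b_def by simp
  qed
  ultimately show ?thesis by simp
qed

lemma dblock:
  assumes lam: "lam \<in> carrier_vec N" and v: "v \<in> carrier_vec N" and z: "z \<in> carrier_vec N"
  shows "(v @\<^sub>v z) \<bullet> (four_block_mat (diagv lam) (0\<^sub>m (dim_vec lam) (dim_vec lam)) (0\<^sub>m (dim_vec lam) (dim_vec lam)) (- diagv lam) *\<^sub>v (v @\<^sub>v z))
     = (\<Sum>i<N. lam $ i * (v $ i)\<^sup>2) + (\<Sum>i<N. - lam $ i * (z $ i)\<^sup>2)"
proof -
  have d: "dim_vec lam = N" using lam by simp
  have e1: "diagv lam = gdiag N (\<lambda>i. lam $ i)" using diagv_gdiag[of lam] d by simp
  have e2: "- diagv lam = gdiag N (\<lambda>i. - lam $ i)" by (rule neg_diagv[OF lam])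
  have gc: "gdiag N (\<lambda>i. lam $ i) *\<^sub>v v \<in> carrier_vec N" "gdiag N (\<lambda>i. - lam $ i) *\<^sub>v z \<in> carrier_vec N"
    using v z by (auto intro: mult_mat_vec_carrier[OF gdiag_carrier])
  have "four_block_mat (gdiag N (\<lambda>i. lam $ i)) (0\<^sub>m N N) (0\<^sub>m N N) (gdiag N (\<lambda>i. - lam $ i)) *\<^sub>v (v @\<^sub>v z)
     = (gdiag N (\<lambda>i. lam $ i) *\<^sub>v v + 0\<^sub>m N N *\<^sub>v z) @\<^sub>v (0\<^sub>m N N *\<^sub>v v + gdiag N (\<lambda>i. - lam $ i) *\<^sub>v z)"
    by (rule four_block_mat_mult_vec[OF _ _ _ _ v z]) auto
  also have "\<dots> = (gdiag N (\<lambda>i. lam $ i) *\<^sub>v v) @\<^sub>v (gdiag N (\<lambda>i. - lam $ i) *\<^sub>v z)"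
    using v z gc by (simp add: zero_mult_vec')
  finally have "(v @\<^sub>v z) \<bullet> (four_block_mat (gdiag N (\<lambda>i. lam $ i)) (0\<^sub>m N N) (0\<^sub>m N N) (gdiag N (\<lambda>i. - lam $ i)) *\<^sub>v (v @\<^sub>v z))
    = v \<bullet> (gdiag N (\<lambda>i. lam $ i) *\<^sub>v v) + z \<bullet> (gdiag N (\<lambda>i. - lam $ i) *\<^sub>v z)"
    using scalar_prod_append[OF v z gc] by simp
  moreover have e2': "- gdiag N (\<lambda>i. lam $ i) = gdiag N (\<lambda>i. - lam $ i)" using e1 e2 by simp
  ultimately show ?thesis unfolding e1 e2' d gdiag_quad[OF v] gdiag_quad[OF z] by simp
qed

lemma blockquad:
  assumes r: "(r :: real vec) \<in> carrier_vec nG" and P: "P \<in> carrier_mat nG nG" and x: "x \<in> carrier_vec nG"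
  shows "(vec 1 (\<lambda>_. s) @\<^sub>v x) \<bullet> (four_block_mat (mat 1 1 (\<lambda>_. c)) (mat_of_row r) ((mat_of_row r)\<^sup>T) P *\<^sub>v (vec 1 (\<lambda>_. s) @\<^sub>v x))
    = c * s\<^sup>2 + 2 * s * (r \<bullet> x) + x \<bullet> (P *\<^sub>v x)"
proof -
  define a where "a = vec 1 (\<lambda>_::nat. s)"
  have a: "a \<in> carrier_vec 1" unfolding a_def by simp
  have B: "mat_of_row r \<in> carrier_mat 1 nG" using r by simp
  have C: "(mat_of_row r)\<^sup>T \<in> carrier_mat nG 1" using r by simp
  have A: "mat 1 1 (\<lambda>_. c) \<in> carrier_mat 1 1" by simp
  have top: "mat 1 1 (\<lambda>_. c) *\<^sub>v a + mat_of_row r *\<^sub>v x = vec 1 (\<lambda>_. c * s + r \<bullet> x)"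
    using r x unfolding a_def by (intro eq_vecI) (auto simp: scalar_prod_def)
  have bot: "(mat_of_row r)\<^sup>T *\<^sub>v a + P *\<^sub>v x \<in> carrier_vec nG" using C P a x by auto
  have "four_block_mat (mat 1 1 (\<lambda>_. c)) (mat_of_row r) ((mat_of_row r)\<^sup>T) P *\<^sub>v (a @\<^sub>v x)
    = vec 1 (\<lambda>_. c * s + r \<bullet> x) @\<^sub>v ((mat_of_row r)\<^sup>T *\<^sub>v a + P *\<^sub>v x)"
    using four_block_mat_mult_vec[OF A B C P a x] top by simp
  hence "(a @\<^sub>v x) \<bullet> (four_block_mat (mat 1 1 (\<lambda>_. c)) (mat_of_row r) ((mat_of_row r)\<^sup>T) P *\<^sub>v (a @\<^sub>v x))
     = a \<bullet> vec 1 (\<lambda>_. c * s + r \<bullet> x) + x \<bullet> ((mat_of_row r)\<^sup>T *\<^sub>v a + P *\<^sub>v x)"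
    using scalar_prod_append[OF a x _ bot, of "vec 1 (\<lambda>_. c * s + r \<bullet> x)"] by simp
  also have "a \<bullet> vec 1 (\<lambda>_. c * s + r \<bullet> x) = s * (c * s + r \<bullet> x)"
    unfolding a_def by (simp add: scalar_prod_def)
  also have "x \<bullet> ((mat_of_row r)\<^sup>T *\<^sub>v a + P *\<^sub>v x) = x \<bullet> ((mat_of_row r)\<^sup>T *\<^sub>v a) + x \<bullet> (P *\<^sub>v x)"
    by (rule scalar_prod_add_distrib[OF x]) (use C a P x in auto)
  also have "x \<bullet> ((mat_of_row r)\<^sup>T *\<^sub>v a) = (mat_of_row r *\<^sub>v x) \<bullet> a" by (rule tr_scalar[OF B x a])
  also have "(mat_of_row r *\<^sub>v x) \<bullet> a = (r \<bullet> x) * s"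
    using r x unfolding a_def by (simp add: scalar_prod_def)
  finally show ?thesis unfolding a_def by (simp add: power2_eq_square algebra_simps)
qed

lemma ell_poly:
  assumes H: "H \<in> carrier_mat nX nG" and h: "h \<in> carrier_vec nX" and h0: "\<forall>i<nX. h $ i \<ge> 0"
    and P: "P \<in> carrier_mat nG nG"
    and LMI2: "\<forall>i<nX. psd (Suc nG) (four_block_mat (mat 1 1 (\<lambda>_. (h $ i)\<^sup>2)) (mat_of_row (row H i))
                        ((mat_of_row (row H i))\<^sup>T) P)"
    and x: "x \<in> carrier_vec nG" and V: "x \<bullet> (P *\<^sub>v x) \<le> 1"
  shows "x \<in> polyX nG H h"
proof -
  have "- (h $ i) \<le> (H *\<^sub>v x) $ i \<and> (H *\<^sub>v x) $ i \<le> h $ i" if i: "i < nX" for i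
  proof -
    define q where "q = row H i \<bullet> x"
    define c where "c = h $ i"
    define v where "v = x \<bullet> (P *\<^sub>v x)"
    have r: "row H i \<in> carrier_vec nG" using H i by simp
    have Hx: "(H *\<^sub>v x) $ i = q" unfolding q_def using H i by simp
    have quad: "c\<^sup>2 * s\<^sup>2 + 2 * s * q + v \<ge> 0" for s
    proof -
      have "vec 1 (\<lambda>_. s) @\<^sub>v x \<in> carrier_vec (1 + nG)"
        by (rule append_carrier_vec[OF _ x]) simp
      hence "vec 1 (\<lambda>_. s) @\<^sub>v x \<in> carrier_vec (Suc nG)" by simp
      hence "0 \<le> (vec 1 (\<lambda>_. s) @\<^sub>v x) \<bullet> (four_block_mat (mat 1 1 (\<lambda>_. (h $ i)\<^sup>2)) (mat_of_row (row H i))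
                        ((mat_of_row (row H i))\<^sup>T) P *\<^sub>v (vec 1 (\<lambda>_. s) @\<^sub>v x))"
        using LMI2 i unfolding psd_def by blast
      thus ?thesis unfolding blockquad[OF r P x] q_def c_def v_def .
    qed
    have c0: "c \<ge> 0" using h0 i unfolding c_def by simp
    have v1: "v \<le> 1" using V unfolding v_def .
    have "q\<^sup>2 \<le> c\<^sup>2"
    proof (cases "c = 0")
      case True
      show ?thesis
      proof (rule ccontr)
        assume "\<not> q\<^sup>2 \<le> c\<^sup>2"
        hence "q \<noteq> 0" using True by simp
        have "c\<^sup>2 * (- (v + 1) / (2 * q))\<^sup>2 + 2 * (- (v + 1) / (2 * q)) * q + v \<ge> 0" by (rule quad)
        thus False using True \<open>q \<noteq> 0\<close> by (simp add: field_simps)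
      qed
    next
      case False
      hence cp: "c > 0" using c0 by simp
      have "c\<^sup>2 * (- q / c\<^sup>2)\<^sup>2 + 2 * (- q / c\<^sup>2) * q + v \<ge> 0" by (rule quad)
      hence "v - q\<^sup>2 / c\<^sup>2 \<ge> 0" using cp by (simp add: field_simps power2_eq_square)
      hence "q\<^sup>2 / c\<^sup>2 \<le> 1" using v1 by simp
      thus ?thesis using cp by (simp add: field_simps)
    qed
    hence "\<bar>q\<bar> \<le> c" using c0 by (metis abs_le_square_iff abs_of_nonneg)
    thus ?thesis unfolding Hx c_def by auto
  qed
  thus ?thesis unfolding polyX_def using x h by auto
qed


lemma vec_rearr: assumes "(a :: real vec) \<in> carrier_vec N" "b \<in> carrier_vec N" "c \<in> carrier_vec N" "d \<in> carrier_vec N"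
  and "a = b + (c + d)" shows "a - c = b + d"
  using assms by (intro eq_vecI) auto

lemma vec_rearr2: assumes "(p :: real vec) \<in> carrier_vec N" "q \<in> carrier_vec N" "r \<in> carrier_vec N"
  shows "(p + q) + r = (0\<^sub>v N + p) + (r + q)"
  using assms by (intro eq_vecI) auto



theorem lemma2:
  fixes nG nu nX l :: nat and n :: "nat \<Rightarrow> nat" and W :: "nat \<Rightarrow> real mat"
    and \<phi> :: "real \<Rightarrow> real" and AG BG H P :: "real mat"
    and h vlo vup \<alpha> \<beta> lam :: "real vec"
  defines "n\<phi> \<equiv> off n (Suc l)"
  assumes l: "l \<ge> 1"
    and n0: "n 0 = nG" and nl: "n (Suc l) = nu"
    and W: "\<forall>i\<in>{1..Suc l}. W i \<in> carrier_mat (n i) (n (i - 1))"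
    and phi0: "\<phi> 0 = 0"
    and AG: "AG \<in> carrier_mat nG nG" and BG: "BG \<in> carrier_mat nG nu"
    and H: "H \<in> carrier_mat nX nG" and h: "h \<in> carrier_vec nX" and h0: "\<forall>i<nX. h $ i \<ge> 0"
    and vlo: "vlo \<in> carrier_vec n\<phi>" and vup: "vup \<in> carrier_vec n\<phi>"
    and vle: "\<forall>i<n\<phi>. vlo $ i \<le> vup $ i"
    and vbound: "\<forall>x\<in>polyX nG H h. \<forall>i<n\<phi>.
        vlo $ i \<le> stackv (layer_v \<phi> W x) l $ i \<and> stackv (layer_v \<phi> W x) l $ i \<le> vup $ i"
    and \<alpha>: "\<alpha> \<in> carrier_vec n\<phi>" and \<beta>: "\<beta> \<in> carrier_vec n\<phi>"
    and \<alpha>\<beta>: "\<forall>i<n\<phi>. \<alpha> $ i \<le> \<beta> $ i"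
    and sector: "\<forall>i<n\<phi>. \<forall>\<nu>. vlo $ i \<le> \<nu> \<and> \<nu> \<le> vup $ i \<longrightarrow>
                   (\<phi> \<nu> - \<alpha> $ i * \<nu>) * (\<beta> $ i * \<nu> - \<phi> \<nu>) \<ge> 0"
    and P: "pos_def nG P"
    and lam: "lam \<in> carrier_vec n\<phi>" and lam0: "\<forall>i<n\<phi>. lam $ i \<ge> 0"
    and LMI: "neg_def (nG + n\<phi>) (lmi_lhs AG BG P n W l \<alpha> \<beta> lam)"
    and LMI2: "\<forall>i<nX. psd (Suc nG)
        (four_block_mat (mat 1 1 (\<lambda>_. (h $ i)\<^sup>2)) (mat_of_row (row H i))
                        ((mat_of_row (row H i))\<^sup>T) P)"
  shows "loc_asym_stable nG AG BG (nn_ctrl \<phi> W l) \<and>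
         ellipsoid nG P \<subseteq> roa nG AG BG (nn_ctrl \<phi> W l) H h"
proof -
  have Nd: "n\<phi> = off n (Suc l)" by (simp add: n\<phi>_def)
  obtain i0 where i0: "l = Suc i0" using l by (cases l) auto
  have Pc: "P \<in> carrier_mat nG nG" using P unfolding pos_def_def by auto
  define V where "V x = x \<bullet> (P *\<^sub>v x)" for x
  obtain \<mu> where mu: "\<mu> > 0" "\<forall>x\<in>carrier_vec nG. \<mu> * (x \<bullet> x) \<le> V x"
    using pd_uniform[OF Pc] P unfolding pos_def_def V_def by blast
  obtain C where Cc: "C \<ge> 0" "\<forall>x\<in>carrier_vec nG. V x \<le> C * (x \<bullet> x)"
    using quad_upper[OF Pc] unfolding V_def by blast
  define L where "L = lmi_lhs AG BG P n W l \<alpha> \<beta> lam"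
  have Lc: "L \<in> carrier_mat (nG + n\<phi>) (nG + n\<phi>)"
    and Ln: "\<forall>x\<in>carrier_vec (nG + n\<phi>). x \<noteq> 0\<^sub>v (nG + n\<phi>) \<longrightarrow> x \<bullet> (L *\<^sub>v x) < 0"
    using LMI unfolding neg_def_def L_def by auto
  obtain e where e: "e > 0" "\<forall>y\<in>carrier_vec (nG + n\<phi>). y \<bullet> (L *\<^sub>v y) \<le> - e * (y \<bullet> y)"
    using nd_uniform[OF Lc Ln] by blast
  have EX: "x \<in> polyX nG H h" if "x \<in> carrier_vec nG" "V x \<le> 1" for x
    using ell_poly[OF H h h0 Pc LMI2 that(1)] that(2) unfolding V_def by blast

  have W1: "W 1 \<in> carrier_mat (n 1) (n 0)" using bspec[OF W, of 1] by simp
  have WSl: "W (Suc l) \<in> carrier_mat (n (Suc l)) (n l)" using bspec[OF W, of "Suc l"] by simp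
  have W2: "\<forall>j\<in>{2..Suc i0}. W j \<in> carrier_mat (n j) (n (j - 1))" using W i0 by auto
  have NvwC: "Nvw n W l \<in> carrier_mat n\<phi> n\<phi>" using Nvw_carrier[of n W i0] i0 Nd by simp
  have NuwC: "Nuw n W l \<in> carrier_mat nu n\<phi>" unfolding Nuw_def rowblk_def using nl Nd by simp
  have NvxC: "Nvx n W l \<in> carrier_mat n\<phi> nG" unfolding Nvx_def using n0 Nd by simp
  have NuxE: "Nux n l = 0\<^sub>m nu nG" unfolding Nux_def using nl n0 by simp
  define Da where "Da = gdiag n\<phi> (\<lambda>i. (\<alpha> $ i + \<beta> $ i) / 2)"
  define Db where "Db = gdiag n\<phi> (\<lambda>i. (\<beta> $ i - \<alpha> $ i) / 2)"
  have DaC: "Da \<in> carrier_mat n\<phi> n\<phi>" and DbC: "Db \<in> carrier_mat n\<phi> n\<phi>" unfolding Da_def Db_def by auto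
  have C4e: "C4 n W l \<alpha> \<beta> = Nvw n W l * Da" unfolding C4_def Da_def using diag_half_plus[OF \<alpha> \<beta>] by simp
  have C3e: "C3 n W l \<alpha> \<beta> = Nvw n W l * Db" unfolding C3_def Db_def using diag_half_minus[OF \<alpha> \<beta>] by simp
  have C2e: "C2 n W l \<alpha> \<beta> = Nuw n W l * Da" unfolding C2_def Da_def using diag_half_plus[OF \<alpha> \<beta>] by simp
  have C1e: "C1 n W l \<alpha> \<beta> = Nuw n W l * Db" unfolding C1_def Db_def using diag_half_minus[OF \<alpha> \<beta>] by simp
  have C4C: "C4 n W l \<alpha> \<beta> \<in> carrier_mat n\<phi> n\<phi>" unfolding C4e using NvwC DaC by simp
  have C3C: "C3 n W l \<alpha> \<beta> \<in> carrier_mat n\<phi> n\<phi>" unfolding C3e using NvwC DbC by simp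
  have C2C: "C2 n W l \<alpha> \<beta> \<in> carrier_mat nu n\<phi>" unfolding C2e using NuwC DaC by simp
  have C1C: "C1 n W l \<alpha> \<beta> \<in> carrier_mat nu n\<phi>" unfolding C1e using NuwC DbC by simp
  have Nlow: "Nvw n W l $$ (r,c) = 0" if "r < n\<phi>" "c < n\<phi>" "r \<le> c" for r c
    using Nvw_lower[of r n i0 c W] that i0 Nd by simp
  have C4low: "C4 n W l \<alpha> \<beta> $$ (r,c) = 0" if "r < n\<phi>" "c < n\<phi>" "r \<le> c" for r c
    unfolding C4e Da_def by (rule lower_mult_gdiag[OF NvwC Nlow that])
  define M4 where "M4 = IC4inv n W l \<alpha> \<beta>"
  have M4: "M4 * (1\<^sub>m n\<phi> - C4 n W l \<alpha> \<beta>) = 1\<^sub>m n\<phi>" "M4 \<in> carrier_mat n\<phi> n\<phi>"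
    using unit_lower_inverse[OF C4C C4low] unfolding M4_def IC4inv_def Nd[symmetric] by auto
  have IC: "1\<^sub>m n\<phi> - C4 n W l \<alpha> \<beta> \<in> carrier_mat n\<phi> n\<phi>" using minus_carrier_mat[OF C4C] by simp
  have tNvxE: "tNvx n W l \<alpha> \<beta> = M4 * Nvx n W l" unfolding tNvx_def M4_def ..
  have tNvzE: "tNvz n W l \<alpha> \<beta> = M4 * C3 n W l \<alpha> \<beta>" unfolding tNvz_def M4_def ..
  have tNuxE: "tNux n W l \<alpha> \<beta> = 0\<^sub>m nu nG + C2 n W l \<alpha> \<beta> * M4 * Nvx n W l" unfolding tNux_def M4_def NuxE ..
  have tNuzE: "tNuz n W l \<alpha> \<beta> = C1 n W l \<alpha> \<beta> + C2 n W l \<alpha> \<beta> * M4 * C3 n W l \<alpha> \<beta>" unfolding tNuz_def M4_def ..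
  have tNvxC: "tNvx n W l \<alpha> \<beta> \<in> carrier_mat n\<phi> nG" unfolding tNvxE using M4 NvxC by simp
  have tNvzC: "tNvz n W l \<alpha> \<beta> \<in> carrier_mat n\<phi> n\<phi>" unfolding tNvzE using M4 C3C by simp
  have tNuxC: "tNux n W l \<alpha> \<beta> \<in> carrier_mat nu nG" unfolding tNuxE using M4 NvxC C2C by simp
  have tNuzC: "tNuz n W l \<alpha> \<beta> \<in> carrier_mat nu n\<phi>" unfolding tNuzE using M4 C3C C2C C1C by simp
  have RVC: "tRV n W l \<alpha> \<beta> \<in> carrier_mat (nG + nu) (nG + n\<phi>)"
    unfolding tRV_def n0 Nd[symmetric] using tNuzC by simp
  have RphiC: "tRphi n W l \<alpha> \<beta> \<in> carrier_mat (n\<phi> + n\<phi>) (nG + n\<phi>)"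
    unfolding tRphi_def n0 Nd[symmetric] using tNvxC by simp
  define Mb where "Mb = four_block_mat (AG\<^sup>T * P * AG - P) (AG\<^sup>T * P * BG) (BG\<^sup>T * P * AG) (BG\<^sup>T * P * BG)"
  define Dd where "Dd = four_block_mat (diagv lam) (0\<^sub>m (dim_vec lam) (dim_vec lam)) (0\<^sub>m (dim_vec lam) (dim_vec lam)) (- diagv lam)"
  have MbC: "Mb \<in> carrier_mat (nG + nu) (nG + nu)" unfolding Mb_def
    by (rule four_block_carrier_mat) (use AG BG Pc in \<open>auto intro: minus_carrier_mat\<close>)
  have dl: "dim_vec lam = n\<phi>" using lam by simp
  have DdC: "Dd \<in> carrier_mat (n\<phi> + n\<phi>) (n\<phi> + n\<phi>)" unfolding Dd_def
    by (rule four_block_carrier_mat) (auto simp: diagv_gdiag dl)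
  have LE: "L = (tRV n W l \<alpha> \<beta>)\<^sup>T * Mb * tRV n W l \<alpha> \<beta> + (tRphi n W l \<alpha> \<beta>)\<^sup>T * Dd * tRphi n W l \<alpha> \<beta>"
    unfolding L_def lmi_lhs_def Mb_def Dd_def ..

  have step: "V (AG *\<^sub>v x + BG *\<^sub>v nn_ctrl \<phi> W l x) \<le> V x - e * (x \<bullet> x)" if xX: "x \<in> polyX nG H h" for x
  proof -
    have x: "x \<in> carrier_vec nG" using xX unfolding polyX_def by auto
    have x0: "x \<in> carrier_vec (n 0)" using x n0 by simp
    define wl where "wl = layer_w \<phi> W x"
    define vl where "vl = layer_v \<phi> W x"
    have wlc: "\<forall>j\<in>{1..l}. wl j \<in> carrier_vec (n j)" using layer_w_carrier[OF x0 W] unfolding wl_def by auto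
    have vlc: "\<forall>j\<in>{1..l}. vl j \<in> carrier_vec (n j)" using layer_v_carrier[OF x0 W] unfolding vl_def by auto
    define v where "v = stackv vl l"
    define w where "w = stackv wl l"
    have vc: "v \<in> carrier_vec n\<phi>" unfolding v_def Nd by (rule stackv_carrier[OF vlc])
    have wc: "w \<in> carrier_vec n\<phi>" unfolding w_def Nd by (rule stackv_carrier[OF wlc])
    have wv: "w = map_vec \<phi> v"
    proof -
      have "stackv wl l = stackv (\<lambda>j. map_vec \<phi> (vl j)) l"
      proof (rule stackv_cong, rule ballI)
        fix j assume "j \<in> {1..l}"
        then obtain k where "j = Suc k" by (cases j) auto
        then show "wl j = map_vec \<phi> (vl j)" unfolding wl_def vl_def layer_v_def by simp
      qed
      thus ?thesis unfolding w_def v_def stackv_map .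
    qed
    have wi: "w $ i = \<phi> (v $ i)" if "i < n\<phi>" for i using wv vc that by simp
    have vb: "vlo $ i \<le> v $ i \<and> v $ i \<le> vup $ i" if "i < n\<phi>" for i
      using vbound xX that unfolding v_def vl_def by blast
    have sec: "(\<phi> (v $ i) - \<alpha> $ i * v $ i) * (\<beta> $ i * v $ i - \<phi> (v $ i)) \<ge> 0" if "i < n\<phi>" for i
      using sector vb[OF that] that by blast
    define z where "z = vec n\<phi> (\<lambda>i. if \<alpha> $ i = \<beta> $ i then 0 else (2 * w $ i - (\<alpha> $ i + \<beta> $ i) * v $ i) / (\<beta> $ i - \<alpha> $ i))"
    have zc: "z \<in> carrier_vec n\<phi>" unfolding z_def by simp
    have Davc: "Da *\<^sub>v v \<in> carrier_vec n\<phi>" using DaC vc by simp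
    have Dbzc: "Db *\<^sub>v z \<in> carrier_vec n\<phi>" using DbC zc by simp
    have wDz: "w = Da *\<^sub>v v + Db *\<^sub>v z"
    proof (rule eq_vecI)
      show "dim_vec w = dim_vec (Da *\<^sub>v v + Db *\<^sub>v z)" using wc DbC by simp
      fix i assume "i < dim_vec (Da *\<^sub>v v + Db *\<^sub>v z)"
      hence i: "i < n\<phi>" using DbC by simp
      have ent: "(Da *\<^sub>v v + Db *\<^sub>v z) $ i = (\<alpha> $ i + \<beta> $ i) / 2 * v $ i + (\<beta> $ i - \<alpha> $ i) / 2 * z $ i"
        using i vc zc unfolding Da_def Db_def by (simp add: gdiag_mult)
      show "w $ i = (Da *\<^sub>v v + Db *\<^sub>v z) $ i"
      proof (cases "\<alpha> $ i = \<beta> $ i")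
        case True
        have eq: "(\<phi> (v $ i) - \<alpha> $ i * v $ i) * (\<beta> $ i * v $ i - \<phi> (v $ i)) = - (\<phi> (v $ i) - \<alpha> $ i * v $ i)\<^sup>2"
          using True by (simp add: power2_eq_square algebra_simps)
        have "(\<phi> (v $ i) - \<alpha> $ i * v $ i)\<^sup>2 \<le> 0" using sec[OF i] eq by simp
        hence "\<phi> (v $ i) = \<alpha> $ i * v $ i" by simp
        moreover have "z $ i = 0" using True i unfolding z_def by simp
        ultimately show ?thesis using ent wi[OF i] True by simp
      next
        case False
        hence d: "\<beta> $ i - \<alpha> $ i \<noteq> 0" by simp
        have "z $ i = (2 * w $ i - (\<alpha> $ i + \<beta> $ i) * v $ i) / (\<beta> $ i - \<alpha> $ i)" using False i unfolding z_def by simp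
        then show ?thesis using ent d by (simp add: field_simps)
      qed
    qed
    have zv: "(z $ i)\<^sup>2 \<le> (v $ i)\<^sup>2" if i: "i < n\<phi>" for i
    proof (cases "\<alpha> $ i = \<beta> $ i")
      case True
      then show ?thesis using i unfolding z_def by simp
    next
      case False
      define a where "a = \<alpha> $ i"
      define b where "b = \<beta> $ i"
      define X where "X = \<phi> (v $ i) - a * v $ i"
      define Y where "Y = b * v $ i - \<phi> (v $ i)"
      have ab: "a < b" using False \<alpha>\<beta> i unfolding a_def b_def by force
      have XY: "X * Y \<ge> 0" using sec[OF i] unfolding X_def Y_def a_def b_def .
      have zi: "z $ i = (X - Y) / (b - a)" using False i wi[OF i] unfolding z_def X_def Y_def a_def b_def
        by (simp add: algebra_simps)
      have vi: "v $ i = (X + Y) / (b - a)" using ab unfolding X_def Y_def by (simp add: field_simps)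
      have "(X - Y)\<^sup>2 \<le> (X + Y)\<^sup>2" using XY by (simp add: power2_eq_square algebra_simps)
      hence "(X - Y)\<^sup>2 / (b - a)\<^sup>2 \<le> (X + Y)\<^sup>2 / (b - a)\<^sup>2" by (simp add: divide_right_mono)
      thus ?thesis unfolding zi vi by (simp add: power_divide)
    qed
    have Dnn: "0 \<le> (\<Sum>i<n\<phi>. lam $ i * (v $ i)\<^sup>2) + (\<Sum>i<n\<phi>. - lam $ i * (z $ i)\<^sup>2)"
    proof -
      have "(\<Sum>i<n\<phi>. lam $ i * (v $ i)\<^sup>2) + (\<Sum>i<n\<phi>. - lam $ i * (z $ i)\<^sup>2) = (\<Sum>i<n\<phi>. lam $ i * ((v $ i)\<^sup>2 - (z $ i)\<^sup>2))"
        by (simp add: sum.distrib[symmetric] algebra_simps)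
      also have "\<dots> \<ge> 0" using lam0 zv by (intro sum_nonneg mult_nonneg_nonneg) auto
      finally show ?thesis .
    qed
    have v_eq: "Nvx n W l *\<^sub>v x + Nvw n W l *\<^sub>v w = v"
    proof -
      let ?g1 = "\<lambda>j. if j = 1 then W 1 *\<^sub>v x else 0\<^sub>v (n j)"
      let ?g2 = "\<lambda>j. if j = 1 then 0\<^sub>v (n 1) else W j *\<^sub>v wl (j - 1)"
      have e1: "Nvx n W l *\<^sub>v x = stackv ?g1 l" by (rule Nvx_mult[of l x n W, OF l x0 W1])
      have e2: "Nvw n W l *\<^sub>v w = stackv ?g2 l"
        unfolding w_def i0 by (rule Nvw_mult) (use wlc W2 i0 in auto)
      have gc: "\<forall>j\<in>{1..l}. ?g1 j \<in> carrier_vec (n j) \<and> ?g2 j \<in> carrier_vec (n j)"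
      proof
        fix j assume j: "j \<in> {1..l}"
        show "?g1 j \<in> carrier_vec (n j) \<and> ?g2 j \<in> carrier_vec (n j)"
        proof (cases "j = 1")
          case True then show ?thesis using W1 x0 by auto
        next
          case False
          have "W j \<in> carrier_mat (n j) (n (j - 1))" using W j by auto
          moreover have "wl (j - 1) \<in> carrier_vec (n (j - 1))" using layer_w_carrier[OF x0 W, of "j - 1" \<phi>] j
            unfolding wl_def by auto
          ultimately show ?thesis using False by auto
        qed
      qed
      have "stackv ?g1 l + stackv ?g2 l = stackv (\<lambda>j. ?g1 j + ?g2 j) l" by (rule stackv_add[OF gc])
      also have "\<dots> = stackv vl l"
      proof (rule stackv_cong, rule ballI)
        fix j assume j: "j \<in> {1..l}"
        show "?g1 j + ?g2 j = vl j"
        proof (cases "j = 1")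
          case True
          have "W 1 *\<^sub>v x \<in> carrier_vec (n 1)" using W1 x0 by auto
          then show ?thesis using True unfolding vl_def layer_v_def by simp
        next
          case False
          have "W j *\<^sub>v wl (j - 1) \<in> carrier_vec (n j)" using bspec[OF gc j] False by simp
          then show ?thesis using False unfolding vl_def layer_v_def wl_def by simp
        qed
      qed
      finally show ?thesis unfolding e1 e2 v_def .
    qed
    have uc: "nn_ctrl \<phi> W l x \<in> carrier_vec nu"
      using layer_w_carrier[OF x0 W, of l \<phi>] WSl nl unfolding nn_ctrl_def by auto
    have u_eq: "Nuw n W l *\<^sub>v w = nn_ctrl \<phi> W l x"
      using Nuw_mult[of l W n wl, OF l WSl wlc] unfolding w_def nn_ctrl_def wl_def by simp
    have C4v: "C4 n W l \<alpha> \<beta> *\<^sub>v v = Nvw n W l *\<^sub>v (Da *\<^sub>v v)" unfolding C4e using NvwC DaC vc by simp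
    have C3z: "C3 n W l \<alpha> \<beta> *\<^sub>v z = Nvw n W l *\<^sub>v (Db *\<^sub>v z)" unfolding C3e using NvwC DbC zc by simp
    have C2v: "C2 n W l \<alpha> \<beta> *\<^sub>v v = Nuw n W l *\<^sub>v (Da *\<^sub>v v)" unfolding C2e using NuwC DaC vc by simp
    have C1z: "C1 n W l \<alpha> \<beta> *\<^sub>v z = Nuw n W l *\<^sub>v (Db *\<^sub>v z)" unfolding C1e using NuwC DbC zc by simp
    have Nxc: "Nvx n W l *\<^sub>v x \<in> carrier_vec n\<phi>" using NvxC x by simp
    have C4vc: "C4 n W l \<alpha> \<beta> *\<^sub>v v \<in> carrier_vec n\<phi>" using C4C vc by simp
    have C3zc: "C3 n W l \<alpha> \<beta> *\<^sub>v z \<in> carrier_vec n\<phi>" using C3C zc by simp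
    have vv: "v = Nvx n W l *\<^sub>v x + (C4 n W l \<alpha> \<beta> *\<^sub>v v + C3 n W l \<alpha> \<beta> *\<^sub>v z)"
      using v_eq unfolding wDz C4v C3z mult_add_distrib_mat_vec[OF NvwC Davc Dbzc] by simp
    have IV: "(1\<^sub>m n\<phi> - C4 n W l \<alpha> \<beta>) *\<^sub>v v = Nvx n W l *\<^sub>v x + C3 n W l \<alpha> \<beta> *\<^sub>v z"
    proof -
      have "(1\<^sub>m n\<phi> - C4 n W l \<alpha> \<beta>) *\<^sub>v v = 1\<^sub>m n\<phi> *\<^sub>v v - C4 n W l \<alpha> \<beta> *\<^sub>v v"
        by (rule minus_mult_distrib_mat_vec[OF one_carrier_mat C4C vc])
      also have "\<dots> = v - C4 n W l \<alpha> \<beta> *\<^sub>v v" using vc by simp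
      also have "\<dots> = Nvx n W l *\<^sub>v x + C3 n W l \<alpha> \<beta> *\<^sub>v z"
        by (rule vec_rearr[OF vc Nxc C4vc C3zc vv])
      finally show ?thesis .
    qed
    have vM: "v = M4 *\<^sub>v (Nvx n W l *\<^sub>v x) + M4 *\<^sub>v (C3 n W l \<alpha> \<beta> *\<^sub>v z)"
    proof -
      have "v = 1\<^sub>m n\<phi> *\<^sub>v v" using vc by simp
      also have "\<dots> = (M4 * (1\<^sub>m n\<phi> - C4 n W l \<alpha> \<beta>)) *\<^sub>v v" using M4 by simp
      also have "\<dots> = M4 *\<^sub>v ((1\<^sub>m n\<phi> - C4 n W l \<alpha> \<beta>) *\<^sub>v v)" by (rule assoc_mult_mat_vec[OF M4(2) IC vc])
      also have "\<dots> = M4 *\<^sub>v (Nvx n W l *\<^sub>v x) + M4 *\<^sub>v (C3 n W l \<alpha> \<beta> *\<^sub>v z)"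
        unfolding IV by (rule mult_add_distrib_mat_vec[OF M4(2) Nxc C3zc])
      finally show ?thesis .
    qed
    have vt: "v = tNvx n W l \<alpha> \<beta> *\<^sub>v x + tNvz n W l \<alpha> \<beta> *\<^sub>v z"
      unfolding tNvxE tNvzE using vM M4(2) NvxC C3C x zc by simp
    define u where "u = nn_ctrl \<phi> W l x"
    have M4a: "M4 *\<^sub>v (Nvx n W l *\<^sub>v x) \<in> carrier_vec n\<phi>" "M4 *\<^sub>v (C3 n W l \<alpha> \<beta> *\<^sub>v z) \<in> carrier_vec n\<phi>"
      using M4(2) Nxc C3zc by auto
    have ut: "u = tNux n W l \<alpha> \<beta> *\<^sub>v x + tNuz n W l \<alpha> \<beta> *\<^sub>v z"
    proof -
      have "u = Nuw n W l *\<^sub>v (Da *\<^sub>v v) + Nuw n W l *\<^sub>v (Db *\<^sub>v z)"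
        unfolding u_def u_eq[symmetric] wDz by (rule mult_add_distrib_mat_vec[OF NuwC Davc Dbzc])
      also have "\<dots> = C2 n W l \<alpha> \<beta> *\<^sub>v v + C1 n W l \<alpha> \<beta> *\<^sub>v z" unfolding C2v C1z ..
      also have "C2 n W l \<alpha> \<beta> *\<^sub>v v = C2 n W l \<alpha> \<beta> *\<^sub>v (M4 *\<^sub>v (Nvx n W l *\<^sub>v x)) + C2 n W l \<alpha> \<beta> *\<^sub>v (M4 *\<^sub>v (C3 n W l \<alpha> \<beta> *\<^sub>v z))"
        by (subst vM) (rule mult_add_distrib_mat_vec[OF C2C M4a])
      also have "(C2 n W l \<alpha> \<beta> *\<^sub>v (M4 *\<^sub>v (Nvx n W l *\<^sub>v x)) + C2 n W l \<alpha> \<beta> *\<^sub>v (M4 *\<^sub>v (C3 n W l \<alpha> \<beta> *\<^sub>v z))) + C1 n W l \<alpha> \<beta> *\<^sub>v z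
        = (0\<^sub>v nu + C2 n W l \<alpha> \<beta> *\<^sub>v (M4 *\<^sub>v (Nvx n W l *\<^sub>v x))) + (C1 n W l \<alpha> \<beta> *\<^sub>v z + C2 n W l \<alpha> \<beta> *\<^sub>v (M4 *\<^sub>v (C3 n W l \<alpha> \<beta> *\<^sub>v z)))"
        by (rule vec_rearr2) (use C2C C1C M4a zc in auto)
      also have "0\<^sub>v nu + C2 n W l \<alpha> \<beta> *\<^sub>v (M4 *\<^sub>v (Nvx n W l *\<^sub>v x)) = tNux n W l \<alpha> \<beta> *\<^sub>v x"
      proof -
        have "tNux n W l \<alpha> \<beta> *\<^sub>v x = 0\<^sub>m nu nG *\<^sub>v x + (C2 n W l \<alpha> \<beta> * M4 * Nvx n W l) *\<^sub>v x"
          unfolding tNuxE by (rule add_mult_distrib_mat_vec) (use C2C M4 NvxC x in auto)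
        also have "\<dots> = 0\<^sub>v nu + C2 n W l \<alpha> \<beta> *\<^sub>v (M4 *\<^sub>v (Nvx n W l *\<^sub>v x))"
          using assoc3[OF C2C M4(2) NvxC x] x by simp
        finally show ?thesis by simp
      qed
      also have "C1 n W l \<alpha> \<beta> *\<^sub>v z + C2 n W l \<alpha> \<beta> *\<^sub>v (M4 *\<^sub>v (C3 n W l \<alpha> \<beta> *\<^sub>v z)) = tNuz n W l \<alpha> \<beta> *\<^sub>v z"
      proof -
        have "tNuz n W l \<alpha> \<beta> *\<^sub>v z = C1 n W l \<alpha> \<beta> *\<^sub>v z + (C2 n W l \<alpha> \<beta> * M4 * C3 n W l \<alpha> \<beta>) *\<^sub>v z"
          unfolding tNuzE by (rule add_mult_distrib_mat_vec) (use C2C M4 C3C C1C zc in auto)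
        also have "\<dots> = C1 n W l \<alpha> \<beta> *\<^sub>v z + C2 n W l \<alpha> \<beta> *\<^sub>v (M4 *\<^sub>v (C3 n W l \<alpha> \<beta> *\<^sub>v z))"
          using assoc3[OF C2C M4(2) C3C zc] by simp
        finally show ?thesis by simp
      qed
      finally show ?thesis .
    qed
    have uc': "u \<in> carrier_vec nu" using uc unfolding u_def .
    define y where "y = x @\<^sub>v z"
    have yc: "y \<in> carrier_vec (nG + n\<phi>)" unfolding y_def using x zc by simp
    have RVy: "tRV n W l \<alpha> \<beta> *\<^sub>v y = x @\<^sub>v u"
    proof -
      have "tRV n W l \<alpha> \<beta> *\<^sub>v y = (1\<^sub>m nG *\<^sub>v x + 0\<^sub>m nG n\<phi> *\<^sub>v z) @\<^sub>v (tNux n W l \<alpha> \<beta> *\<^sub>v x + tNuz n W l \<alpha> \<beta> *\<^sub>v z)"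
        unfolding tRV_def y_def n0 Nd[symmetric]
        by (rule four_block_mat_mult_vec[OF one_carrier_mat _ tNuxC tNuzC x zc]) simp
      also have "\<dots> = x @\<^sub>v u" using x zc ut by simp
      finally show ?thesis .
    qed
    have Rphiy: "tRphi n W l \<alpha> \<beta> *\<^sub>v y = v @\<^sub>v z"
    proof -
      have "tRphi n W l \<alpha> \<beta> *\<^sub>v y = (tNvx n W l \<alpha> \<beta> *\<^sub>v x + tNvz n W l \<alpha> \<beta> *\<^sub>v z) @\<^sub>v (0\<^sub>m n\<phi> nG *\<^sub>v x + 1\<^sub>m n\<phi> *\<^sub>v z)"
        unfolding tRphi_def y_def n0 Nd[symmetric]
        by (rule four_block_mat_mult_vec[OF tNvxC tNvzC _ one_carrier_mat x zc]) simp
      also have "\<dots> = v @\<^sub>v z" using x zc vt by simp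
      finally show ?thesis .
    qed
    have yLy: "y \<bullet> (L *\<^sub>v y) = (x @\<^sub>v u) \<bullet> (Mb *\<^sub>v (x @\<^sub>v u)) + (v @\<^sub>v z) \<bullet> (Dd *\<^sub>v (v @\<^sub>v z))"
    proof -
      have c1: "(tRV n W l \<alpha> \<beta>)\<^sup>T * Mb * tRV n W l \<alpha> \<beta> \<in> carrier_mat (nG + n\<phi>) (nG + n\<phi>)" using RVC MbC by simp
      have c2: "(tRphi n W l \<alpha> \<beta>)\<^sup>T * Dd * tRphi n W l \<alpha> \<beta> \<in> carrier_mat (nG + n\<phi>) (nG + n\<phi>)" using RphiC DdC by simp
      have "L *\<^sub>v y = ((tRV n W l \<alpha> \<beta>)\<^sup>T * Mb * tRV n W l \<alpha> \<beta>) *\<^sub>v y + ((tRphi n W l \<alpha> \<beta>)\<^sup>T * Dd * tRphi n W l \<alpha> \<beta>) *\<^sub>v y"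
        unfolding LE by (rule add_mult_distrib_mat_vec[OF c1 c2 yc])
      hence "y \<bullet> (L *\<^sub>v y) = y \<bullet> (((tRV n W l \<alpha> \<beta>)\<^sup>T * Mb * tRV n W l \<alpha> \<beta>) *\<^sub>v y) + y \<bullet> (((tRphi n W l \<alpha> \<beta>)\<^sup>T * Dd * tRphi n W l \<alpha> \<beta>) *\<^sub>v y)"
        using scalar_prod_add_distrib[OF yc] c1 c2 yc by simp
      also have "y \<bullet> (((tRV n W l \<alpha> \<beta>)\<^sup>T * Mb * tRV n W l \<alpha> \<beta>) *\<^sub>v y) = (x @\<^sub>v u) \<bullet> (Mb *\<^sub>v (x @\<^sub>v u))"
        using quad_congr[OF RVC MbC yc] RVy by simp
      also have "y \<bullet> (((tRphi n W l \<alpha> \<beta>)\<^sup>T * Dd * tRphi n W l \<alpha> \<beta>) *\<^sub>v y) = (v @\<^sub>v z) \<bullet> (Dd *\<^sub>v (v @\<^sub>v z))"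
        using quad_congr[OF RphiC DdC yc] Rphiy by simp
      finally show ?thesis .
    qed
    have mb: "(x @\<^sub>v u) \<bullet> (Mb *\<^sub>v (x @\<^sub>v u)) = V (AG *\<^sub>v x + BG *\<^sub>v u) - V x"
      unfolding Mb_def V_def by (rule mblock[OF AG BG Pc x uc'])
    have db: "(v @\<^sub>v z) \<bullet> (Dd *\<^sub>v (v @\<^sub>v z)) \<ge> 0"
      unfolding Dd_def dblock[OF lam vc zc] using Dnn .
    have yy: "y \<bullet> y \<ge> x \<bullet> x"
    proof -
      have "y \<bullet> y = x \<bullet> x + z \<bullet> z" unfolding y_def by (rule scalar_prod_append[OF x zc x zc])
      moreover have "z \<bullet> z \<ge> 0" unfolding sprod_sq[OF zc] by (simp add: sum_nonneg)
      ultimately show ?thesis by simp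
    qed
    have "y \<bullet> (L *\<^sub>v y) \<le> - e * (y \<bullet> y)" using e(2) yc by blast
    also have "\<dots> \<le> - e * (x \<bullet> x)" using yy e(1) by simp
    finally have "V (AG *\<^sub>v x + BG *\<^sub>v u) - V x \<le> - e * (x \<bullet> x)" using yLy mb db by simp
    thus ?thesis unfolding u_def by simp
  qed

  define \<pi> where "\<pi> = nn_ctrl \<phi> W l"
  define \<rho> where "\<rho> = max 0 (1 - e / (C + 1))"
  have rho: "0 \<le> \<rho>" "\<rho> < 1" unfolding \<rho>_def using e(1) Cc(1) by auto
  have xx0: "0 \<le> x \<bullet> x" if "x \<in> carrier_vec nG" for x :: "real vec"
    unfolding sprod_sq[OF that] by (simp add: sum_nonneg)
  have Vnn: "0 \<le> V x" if "x \<in> carrier_vec nG" for x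
    using mu(2) that xx0[OF that] mu(1) by (meson order_trans mult_nonneg_nonneg less_imp_le)
  have contr: "V (AG *\<^sub>v x + BG *\<^sub>v \<pi> x) \<le> \<rho> * V x" if x: "x \<in> carrier_vec nG" "V x \<le> 1" for x
  proof -
    have "V (AG *\<^sub>v x + BG *\<^sub>v \<pi> x) \<le> V x - e * (x \<bullet> x)" using step[OF EX[OF x]] unfolding \<pi>_def .
    moreover have "V x \<le> (C + 1) * (x \<bullet> x)" using Cc(2) x(1) xx0[OF x(1)]
      by (smt (verit, best) mult_right_mono)
    hence "V x / (C + 1) \<le> x \<bullet> x" using Cc(1) by (simp add: field_simps)
    hence "e * (V x / (C + 1)) \<le> e * (x \<bullet> x)" using e(1) by (intro mult_left_mono) auto
    ultimately have "V (AG *\<^sub>v x + BG *\<^sub>v \<pi> x) \<le> (1 - e / (C + 1)) * V x" by (simp add: algebra_simps)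
    also have "\<dots> \<le> \<rho> * V x" unfolding \<rho>_def using Vnn[OF x(1)] by (simp add: mult_right_mono)
    finally show ?thesis .
  qed
  have trajc: "traj AG BG \<pi> x0 k \<in> carrier_vec nG" if "x0 \<in> carrier_vec nG" for x0 k
  proof (induction k)
    case 0 then show ?case using that by simp
  next
    case (Suc k) then show ?case using BG by (intro carrier_vecI) simp
  qed
  have inv: "V (traj AG BG \<pi> x0 k) \<le> \<rho> ^ k * V x0" if x0: "x0 \<in> carrier_vec nG" "V x0 \<le> 1" for x0 k
  proof (induction k)
    case 0 then show ?case by simp
  next
    case (Suc k)
    let ?t = "traj AG BG \<pi> x0 k"
    have "\<rho> ^ k \<le> 1" using rho by (simp add: power_le_one)
    hence "\<rho> ^ k * V x0 \<le> V x0" using mult_right_mono[OF _ Vnn[OF x0(1)], of "\<rho> ^ k" 1] by simp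
    hence t1: "V ?t \<le> 1" using Suc x0(2) by simp
    have "V (traj AG BG \<pi> x0 (Suc k)) \<le> \<rho> * V ?t" using contr[OF trajc[OF x0(1)] t1] by simp
    also have "\<dots> \<le> \<rho> * (\<rho> ^ k * V x0)" using Suc rho(1) by (simp add: mult_left_mono)
    finally show ?case by simp
  qed
  have bnd: "traj AG BG \<pi> x0 k \<bullet> traj AG BG \<pi> x0 k \<le> \<rho> ^ k * (V x0 / \<mu>)"
    if x0: "x0 \<in> carrier_vec nG" "V x0 \<le> 1" for x0 k
  proof -
    have "\<mu> * (traj AG BG \<pi> x0 k \<bullet> traj AG BG \<pi> x0 k) \<le> \<rho> ^ k * V x0"
      using mu(2) trajc[OF x0(1)] inv[OF x0] order_trans by blast
    thus ?thesis using mu(1) by (simp add: field_simps)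
  qed
  have conv: "(\<lambda>k. vnorm (traj AG BG \<pi> x0 k)) \<longlonglongrightarrow> 0" if x0: "x0 \<in> carrier_vec nG" "V x0 \<le> 1" for x0
  proof (rule tendsto_sandwich[of "\<lambda>_. 0" _ _ "\<lambda>k. sqrt (\<rho> ^ k * (V x0 / \<mu>))"])
    show "\<forall>\<^sub>F k in sequentially. 0 \<le> vnorm (traj AG BG \<pi> x0 k)"
      using xx0[OF trajc[OF x0(1)]] unfolding vnorm_def by (intro always_eventually allI) simp
    show "\<forall>\<^sub>F k in sequentially. vnorm (traj AG BG \<pi> x0 k) \<le> sqrt (\<rho> ^ k * (V x0 / \<mu>))"
      using bnd[OF x0] unfolding vnorm_def by (intro always_eventually allI) (simp add: real_sqrt_le_mono)
    show "(\<lambda>_. 0) \<longlonglongrightarrow> (0::real)" by simp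
    have "(\<lambda>k. \<rho> ^ k * (V x0 / \<mu>)) \<longlonglongrightarrow> 0 * (V x0 / \<mu>)"
      by (intro tendsto_mult tendsto_const LIMSEQ_power_zero) (use rho in simp)
    hence "(\<lambda>k. sqrt (\<rho> ^ k * (V x0 / \<mu>))) \<longlonglongrightarrow> sqrt 0" by (intro tendsto_real_sqrt) simp
    thus "(\<lambda>k. sqrt (\<rho> ^ k * (V x0 / \<mu>))) \<longlonglongrightarrow> 0" by simp
  qed
  have small: "V x0 < 1 \<and> V x0 < (C + 1) * d\<^sup>2" if x0: "x0 \<in> carrier_vec nG" "vnorm x0 < d" "(C + 1) * d\<^sup>2 \<le> 1" for x0 d
  proof -
    have "x0 \<bullet> x0 < d\<^sup>2"
    proof -
      have "sqrt (x0 \<bullet> x0) < d" using x0(2) unfolding vnorm_def .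
      moreover have "0 \<le> sqrt (x0 \<bullet> x0)" using xx0[OF x0(1)] by simp
      ultimately have "(sqrt (x0 \<bullet> x0))\<^sup>2 < d\<^sup>2" by (intro power_strict_mono) auto
      thus ?thesis using xx0[OF x0(1)] by simp
    qed
    hence "(C + 1) * (x0 \<bullet> x0) < (C + 1) * d\<^sup>2" using Cc(1) by simp
    moreover have "V x0 \<le> (C + 1) * (x0 \<bullet> x0)" using Cc(2) x0(1) xx0[OF x0(1)]
      by (smt (verit, best) mult_right_mono)
    ultimately show ?thesis using x0(3) by simp
  qed
  have stab1: "\<forall>\<epsilon>>0. \<exists>\<delta>>0. \<forall>x0\<in>carrier_vec nG. vnorm x0 < \<delta> \<longrightarrow> (\<forall>k. vnorm (traj AG BG \<pi> x0 k) < \<epsilon>)"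
  proof (intro allI impI)
    fix \<epsilon> :: real assume ep: "\<epsilon> > 0"
    define \<delta> where "\<delta> = min (sqrt (1 / (C + 1))) (\<epsilon> * sqrt (\<mu> / (C + 1)))"
    have C1: "C + 1 > 0" using Cc(1) by simp
    have dpos: "\<delta> > 0" unfolding \<delta>_def using C1 ep mu(1) by simp
    have d1: "(C + 1) * \<delta>\<^sup>2 \<le> 1"
    proof -
      have "\<delta>\<^sup>2 \<le> (sqrt (1 / (C + 1)))\<^sup>2" unfolding \<delta>_def using dpos \<delta>_def
        by (intro power_mono) auto
      thus ?thesis using C1 by (simp add: field_simps)
    qed
    have d2: "(C + 1) * \<delta>\<^sup>2 \<le> \<epsilon>\<^sup>2 * \<mu>"
    proof -
      have "\<delta>\<^sup>2 \<le> (\<epsilon> * sqrt (\<mu> / (C + 1)))\<^sup>2" unfolding \<delta>_def using dpos \<delta>_def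
        by (intro power_mono) auto
      also have "\<dots> = \<epsilon>\<^sup>2 * (\<mu> / (C + 1))" using mu(1) C1 by (simp add: power_mult_distrib)
      finally show ?thesis using C1 by (simp add: field_simps)
    qed
    show "\<exists>\<delta>>0. \<forall>x0\<in>carrier_vec nG. vnorm x0 < \<delta> \<longrightarrow> (\<forall>k. vnorm (traj AG BG \<pi> x0 k) < \<epsilon>)"
    proof (intro exI[of _ \<delta>] conjI dpos ballI impI allI)
      fix x0 k assume x0: "x0 \<in> carrier_vec nG" "vnorm x0 < \<delta>"
      from small[OF x0 d1] have s: "V x0 < 1" "V x0 < (C + 1) * \<delta>\<^sup>2" by auto
      have "traj AG BG \<pi> x0 k \<bullet> traj AG BG \<pi> x0 k \<le> \<rho> ^ k * (V x0 / \<mu>)" using bnd[OF x0(1)] s by simp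
      also have "\<dots> \<le> V x0 / \<mu>"
      proof -
        have "\<rho> ^ k \<le> 1" using rho by (simp add: power_le_one)
        moreover have "0 \<le> V x0 / \<mu>" using Vnn[OF x0(1)] mu(1) by simp
        ultimately show ?thesis using mult_right_mono[of "\<rho> ^ k" 1 "V x0 / \<mu>"] by simp
      qed
      also have "\<dots> < \<epsilon>\<^sup>2" using s(2) d2 mu(1) by (simp add: field_simps)
      finally have "traj AG BG \<pi> x0 k \<bullet> traj AG BG \<pi> x0 k < \<epsilon>\<^sup>2" .
      hence "sqrt (traj AG BG \<pi> x0 k \<bullet> traj AG BG \<pi> x0 k) < sqrt (\<epsilon>\<^sup>2)" by (simp only: real_sqrt_less_iff)
      thus "vnorm (traj AG BG \<pi> x0 k) < \<epsilon>" unfolding vnorm_def using ep by simp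
    qed
  qed
  have stab2: "\<exists>\<delta>>0. \<forall>x0\<in>carrier_vec nG. vnorm x0 < \<delta> \<longrightarrow> (\<lambda>k. vnorm (traj AG BG \<pi> x0 k)) \<longlonglongrightarrow> 0"
  proof (intro exI[of _ "sqrt (1 / (C + 1))"] conjI ballI impI)
    have C1: "C + 1 > 0" using Cc(1) by simp
    show "sqrt (1 / (C + 1)) > 0" using C1 by simp
    fix x0 assume x0: "x0 \<in> carrier_vec nG" "vnorm x0 < sqrt (1 / (C + 1))"
    have "(C + 1) * (sqrt (1 / (C + 1)))\<^sup>2 \<le> 1" using C1 by simp
    from small[OF x0 this] have "V x0 < 1" by simp
    thus "(\<lambda>k. vnorm (traj AG BG \<pi> x0 k)) \<longlonglongrightarrow> 0" using conv x0(1) by simp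
  qed
  have ell: "ellipsoid nG P \<subseteq> roa nG AG BG \<pi> H h"
  proof
    fix x0 assume "x0 \<in> ellipsoid nG P"
    hence x0: "x0 \<in> carrier_vec nG" "V x0 \<le> 1" unfolding ellipsoid_def V_def by auto
    show "x0 \<in> roa nG AG BG \<pi> H h" unfolding roa_def using EX[OF x0] conv[OF x0] by simp
  qed
  show ?thesis unfolding loc_asym_stable_def \<pi>_def[symmetric] using stab1 stab2 ell by simp
qed


end
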